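(* For $1\le a\le n$ and all $u\in\mathbb C$, \[ T^{(a)}_1(u)=\sum_{1\le i_1<i_2<\cdots<i_a\le N}\ \prod_{k=1}^a x_{i_k}\Bigl(u+\frac a2-k\Bigr). \]
   Context: Fix an integer $n\ge 2$ and put $N=2n+2$. Let $Q_a(u)$ ($1\le a\le n$, $u\in\mathbb C$) be algebraically independent commuting indeterminates. Put $d_a=1+\delta_{an}$, $Y_a(u)=Q_a(u-\frac{d_a}{2})/Q_a(u+\frac{d_a}{2})$ for $1\le a\le n$, $Y_0(u)=1$. Let $J=\{1\prec2\prec\cdots\prec n\prec\bar n\prec\cdots\prec\bar2\prec\bar1\}$ be a totally ordered set. For $1\le a\le n$ set $z_a(u)=\frac{Y_a(u+\frac a2)}{Y_{a-1}(u+\frac{a+1}2)}$, $z_{\bar a}(u)=\frac{Y_{a-1}(u+\frac{2n-a+3}2)}{Y_a(u+\frac{2n-a+4}2)}$; set $x_a(u)=z_a(u)$, $x_{2n+3-a}(u)=z_{\bar a}(u)$ for $1\le a\le n$, and $x_{n+1}(u)=-x_{n+2}(u)=\frac{Q_n(u+\frac n2)Q_n(u+\frac{n+4}2)}{Q_n(u+\frac{n+2}2)^2}$. For $1\le a\le n$ define $T^{(a)}_1(u)$ by $T^{(a)}_1(u+\frac12)=\sum z_{i_1}(u+\frac{a-1}2)z_{i_2}(u+\frac{a-3}2)\cdots z_{i_a}(u-\frac{a-1}2)$, the sum running over $(i_1,\dots,i_a)\in J^a$ with $i_1\prec\cdots\prec i_a$ such that whenever $i_k=c$ and $i_l=\bar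 c$ for some $1\le c\le n$, one has $n+k-l\ge c$. *)

theory Defs
  imports Complex_Main "HOL-Library.FuncSet"
begin

text \<open>Parameters: the rank n and the family Q, where Q a u stands for the
indeterminate Q_a(u) (1 <= a <= n), evaluated in the complex numbers.\<close>

definition dd :: "nat \<Rightarrow> nat \<Rightarrow> complex" where
  "dd n a = (if a = n then 2 else 1)"

definition YY :: "nat \<Rightarrow> (nat \<Rightarrow> complex \<Rightarrow> complex) \<Rightarrow> nat \<Rightarrow> complex \<Rightarrow> complex" where
  "YY n Q a u = (if a = 0 then 1 else Q a (u - dd n a / 2) / Q a (u + dd n a / 2))"

definition zu :: "nat \<Rightarrow> (nat \<Rightarrow> complex \<Rightarrow> complex) \<Rightarrow> nat \<Rightarrow> complex \<Rightarrow> complex" where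
  "zu n Q a u = YY n Q a (u + of_nat a / 2) / YY n Q (a - 1) (u + (of_nat a + 1) / 2)"

definition zb :: "nat \<Rightarrow> (nat \<Rightarrow> complex \<Rightarrow> complex) \<Rightarrow> nat \<Rightarrow> complex \<Rightarrow> complex" where
  "zb n Q a u = YY n Q (a - 1) (u + (2 * of_nat n - of_nat a + 3) / 2)
              / YY n Q a (u + (2 * of_nat n - of_nat a + 4) / 2)"

text \<open>The totally ordered set J = {1 < ... < n < bar n < ... < bar 1} is encoded
as {1..2n}: j <= n encodes j, and j > n encodes bar (2n+1-j).\<close>
definition zJ :: "nat \<Rightarrow> (nat \<Rightarrow> complex \<Rightarrow> complex) \<Rightarrow> nat \<Rightarrow> complex \<Rightarrow> complex" where
  "zJ n Q j u = (if j \<le> n then zu n Q j u else zb n Q (2 * n + 1 - j) u)"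

definition xmid :: "nat \<Rightarrow> (nat \<Rightarrow> complex \<Rightarrow> complex) \<Rightarrow> complex \<Rightarrow> complex" where
  "xmid n Q u = Q n (u + of_nat n / 2) * Q n (u + (of_nat n + 4) / 2)
               / (Q n (u + (of_nat n + 2) / 2))^2"

text \<open>x_i for 1 <= i <= N = 2n+2\<close>
definition xx :: "nat \<Rightarrow> (nat \<Rightarrow> complex \<Rightarrow> complex) \<Rightarrow> nat \<Rightarrow> complex \<Rightarrow> complex" where
  "xx n Q i u = (if i \<le> n then zu n Q i u
                 else if i = n + 1 then xmid n Q u
                 else if i = n + 2 then - xmid n Q u
                 else zb n Q (2 * n + 3 - i) u)"

definition admissible :: "nat \<Rightarrow> nat \<Rightarrow> (nat \<Rightarrow> nat) set" where
  "admissible n a = {i \<in> {1..a} \<rightarrow>\<^sub>E {1..2 * n}.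
      (\<forall>k\<in>{1..a}. \<forall>l\<in>{1..a}. k < l \<longrightarrow> i k < i l) \<and>
      (\<forall>k\<in>{1..a}. \<forall>l\<in>{1..a}. \<forall>c\<in>{1..n}.
          i k = c \<and> i l = 2 * n + 1 - c \<longrightarrow> int n + int k - int l \<ge> int c)}"

text \<open>T^{(a)}_1 defined via T^{(a)}_1(u + 1/2) = sum ..., i.e. T1 a u is the sum at u - 1/2.\<close>
definition Tsum :: "nat \<Rightarrow> (nat \<Rightarrow> complex \<Rightarrow> complex) \<Rightarrow> nat \<Rightarrow> complex \<Rightarrow> complex" where
  "Tsum n Q a u = (\<Sum>i\<in>admissible n a.
      \<Prod>k\<in>{1..a}. zJ n Q (i k) (u + (of_nat a - 2 * of_nat k + 1) / 2))"

definition T1 :: "nat \<Rightarrow> (nat \<Rightarrow> complex \<Rightarrow> complex) \<Rightarrow> nat \<Rightarrow> complex \<Rightarrow> complex" where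
  "T1 n Q a u = Tsum n Q a (u - 1 / 2)"

end

theory Submission
  imports Defs
begin

fun Wg :: "(nat \<Rightarrow> complex \<Rightarrow> complex) \<Rightarrow> nat list \<Rightarrow> complex \<Rightarrow> complex" where
  "Wg g [] v = 1"
| "Wg g (x # xs) v = g x v * Wg g xs (v - 1)"

lemma Wg_append: "Wg g (xs @ ys) v = Wg g xs v * Wg g ys (v - of_nat (length xs))"
  by (induction xs arbitrary: v) (auto simp: algebra_simps)

lemma Wg_replicate: "Wg g (replicate k x) v = (\<Prod>i<k. g x (v - of_nat i))"
proof (induction k arbitrary: v)
  case 0 then show ?case by simp
next
  case (Suc k)
  show ?case
    by (simp add: Suc prod.lessThan_Suc_shift algebra_simps del: prod.lessThan_Suc)
qed

lemma Wg_cong: "(\<And>x. x \<in> set xs \<Longrightarrow> g x = h x) \<Longrightarrow> Wg g xs v = Wg h xs v"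
  by (induction xs arbitrary: v) auto

lemma Wg_map: "Wg g (map s xs) v = Wg (\<lambda>x. g (s x)) xs v"
  by (induction xs arbitrary: v) auto

lemma Wg_upt: "Wg g (map i [m..<m+len]) v = (\<Prod>k\<in>{m..<m+len}. g (i k) (v - of_nat (k - m)))"
proof (induction len arbitrary: v)
  case 0 then show ?case by simp
next
  case (Suc len)
  have "Wg g (map i [m..<m+Suc len]) v = Wg g (map i [m..<m+len]) v * g (i (m+len)) (v - of_nat len)"
    by (simp add: Wg_append)
  also have "\<dots> = (\<Prod>k\<in>{m..<m+Suc len}. g (i k) (v - of_nat (k - m)))"
    by (simp add: Suc)
  finally show ?case .
qed

lemma sorted_split:
  fixes X :: "nat set"
  assumes "finite X"
  shows "sorted_list_of_set X = sorted_list_of_set {x\<in>X. x < t} @ sorted_list_of_set {x\<in>X. t \<le> x}"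
proof -
  have f1: "finite {x\<in>X. x < t}" "finite {x\<in>X. t \<le> x}" using assms by auto
  have c: "card X = card {x\<in>X. x < t} + card {x\<in>X. t \<le> x}"
  proof -
    have "X = {x\<in>X. x < t} \<union> {x\<in>X. t \<le> x}" by auto
    then have "card X = card ({x\<in>X. x < t} \<union> {x\<in>X. t \<le> x})" by simp
    also have "\<dots> = card {x\<in>X. x < t} + card {x\<in>X. t \<le> x}"
      by (rule card_Un_disjoint) (use f1 in auto)
    finally show ?thesis .
  qed
  show ?thesis
    using assms f1 c
    by (subst sorted_list_of_set_unique[symmetric])
       (auto simp: sorted_wrt_append)
qed

lemma sorted_strict_image:
  fixes i :: "nat \<Rightarrow> nat"
  assumes "\<forall>k\<in>{1..a}. \<forall>l\<in>{1..a}. k < l \<longrightarrow> i k < i l"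
  shows "sorted_list_of_set (i ` {1..a}) = map i [1..<1+a]"
proof -
  have sw: "sorted_wrt (<) (map i [1..<1+a])"
    unfolding sorted_wrt_map sorted_wrt_iff_nth_less
    using assms by (auto simp del: upt_Suc)
  have inj: "inj_on i {1..a}"
    using assms unfolding inj_on_def by (metis linorder_neqE_nat less_irrefl)
  have "set (map i [1..<1+a]) = i ` {1..a}" by auto
  moreover have "length (map i [1..<1+a]) = card (i ` {1..a})"
    using card_image[OF inj] by simp
  ultimately show ?thesis using sw
    by (subst sorted_list_of_set_unique[symmetric]) auto
qed

lemma YY_nz:
  assumes Qnz: "\<forall>b\<in>{1..n}. \<forall>v. Q b v \<noteq> 0" and "a \<le> n"
  shows "YY n Q a t \<noteq> 0"
  using assms by (auto simp: YY_def)

lemma I1: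
  assumes Qnz: "\<forall>b\<in>{1..n}. \<forall>v. Q b v \<noteq> 0" and f1: "1 \<le> f" and fn: "f < n"
  shows "zJ n Q f t * zJ n Q (2*n+1-f) (t - (of_nat n - of_nat f + 1))
       = zJ n Q (f+1) t * zJ n Q (2*n-f) (t - (of_nat n - of_nat f + 1))"
proof -
  define s where "s = t - (of_nat n - of_nat f + 1 :: complex)"
  define A where "A = YY n Q f (t + of_nat f / 2)"
  define B where "B = YY n Q (f-1) (t + (of_nat f + 1) / 2)"
  define C where "C = YY n Q f (t + of_nat f / 2 + 1)"
  define D where "D = YY n Q (f+1) (t + (of_nat f + 1) / 2)"
  have Bnz: "B \<noteq> 0" unfolding B_def using YY_nz[OF Qnz] fn by simp
  have Cnz: "C \<noteq> 0" unfolding C_def using YY_nz[OF Qnz] fn by simp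
  have Dnz: "D \<noteq> 0" unfolding D_def using YY_nz[OF Qnz] fn by simp
  have z1: "zJ n Q f t = A / B" using fn by (simp add: zJ_def zu_def A_def B_def)
  have e1: "s + (2 * of_nat n - of_nat f + 3) / 2 = t + (of_nat f + 1) / 2"
    unfolding s_def by (simp add: field_simps)
  have e2: "s + (2 * of_nat n - of_nat f + 4) / 2 = t + of_nat f / 2 + 1"
    unfolding s_def by (simp add: field_simps)
  have z2: "zJ n Q (2*n+1-f) s = B / C"
  proof -
    have "\<not> 2*n+1-f \<le> n" "2 * n + 1 - (2 * n + 1 - f) = f" using fn f1 by auto
    then have "zJ n Q (2*n+1-f) s = zb n Q f s" by (simp add: zJ_def)
    also have "\<dots> = YY n Q (f-1) (s + (2 * of_nat n - of_nat f + 3) / 2) / YY n Q f (s + (2 * of_nat n - of_nat f + 4) / 2)"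
      by (simp only: zb_def)
    also have "\<dots> = B / C" by (simp only: e1 e2 B_def C_def)
    finally show ?thesis .
  qed
  have e3: "t + (of_nat (f+1) + 1) / 2 = t + of_nat f / 2 + 1"
    by (simp add: field_simps)
  have z3: "zJ n Q (f+1) t = D / C"
  proof -
    have "zJ n Q (f+1) t = zu n Q (f+1) t" using fn by (simp add: zJ_def)
    also have "\<dots> = YY n Q (f+1) (t + of_nat (f+1) / 2) / YY n Q (f+1-1) (t + (of_nat (f+1) + 1) / 2)"
      by (simp only: zu_def)
    also have "\<dots> = D / C"
    proof -
      have "of_nat (f+1) / 2 = (of_nat f + 1 :: complex) / 2" by simp
      then show ?thesis by (simp only: e3 D_def C_def diff_add_inverse2)
    qed
    finally show ?thesis .
  qed
  have z4: "zJ n Q (2*n-f) s = A / D"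
  proof -
    have "2*n-f > n" "2 * n + 1 - (2 * n - f) = f + 1" using fn f1 by auto
    then have "zJ n Q (2*n-f) s = zb n Q (f+1) s" by (simp add: zJ_def)
    also have "\<dots> = A / D"
    proof -
      have a1: "s + (2 * of_nat n - of_nat (f+1) + 3) / 2 = t + of_nat f / 2"
        unfolding s_def by (simp add: field_simps)
      have a2: "s + (2 * of_nat n - of_nat (f+1) + 4) / 2 = t + (of_nat f + 1) / 2"
        unfolding s_def by (simp add: field_simps)
      show ?thesis unfolding zb_def using a1 a2 by (simp add: A_def D_def)
    qed
    finally show ?thesis .
  qed
  show ?thesis
    unfolding s_def[symmetric] z1 z2 z3 z4 using Bnz Cnz Dnz by (simp add: field_simps)
qed

lemma xmid_prod:
  assumes Qnz: "\<forall>b\<in>{1..n}. \<forall>v. Q b v \<noteq> 0" and n2: "2 \<le> n"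
  shows "xmid n Q t * xmid n Q (t - 1) = zJ n Q n t * zJ n Q (n+1) (t - 1)"
proof -
  define q where "q = (\<lambda>r::complex. Q n (t + of_nat n / 2 + r))"
  have qnz: "q r \<noteq> 0" for r using Qnz n2 by (simp add: q_def)
  define P where "P = YY n Q (n-1) (t + (of_nat n + 1) / 2)"
  have Pnz: "P \<noteq> 0" unfolding P_def using YY_nz[OF Qnz] by simp
  have m1: "xmid n Q t = q 0 * q 2 / (q 1)^2"
    unfolding xmid_def q_def by (simp add: field_simps)
  have m2: "xmid n Q (t - 1) = q (-1) * q 1 / (q 0)^2"
    unfolding xmid_def q_def by (simp add: field_simps)
  have y1: "YY n Q n (t + of_nat n / 2) = q (-1) / q 1"
    unfolding YY_def dd_def q_def using n2 by (simp add: field_simps)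
  have y2: "YY n Q n (t - 1 + (2 * of_nat n - of_nat n + 4) / 2) = q 0 / q 2"
    unfolding YY_def dd_def q_def using n2 by (simp add: field_simps)
  have zn: "zJ n Q n t = (q (-1) / q 1) / P"
    by (simp add: zJ_def zu_def y1 P_def)
  have zb1: "zJ n Q (n+1) (t - 1) = P / (q 0 / q 2)"
  proof -
    have ee: "t - 1 + (2 * of_nat n - of_nat n + 3) / 2 = t + (of_nat n + 1) / 2"
      by (simp add: field_simps)
    have "zJ n Q (n+1) (t-1) = zb n Q n (t-1)" by (simp add: zJ_def)
    also have "\<dots> = YY n Q (n-1) (t - 1 + (2 * of_nat n - of_nat n + 3) / 2) / YY n Q n (t - 1 + (2 * of_nat n - of_nat n + 4) / 2)"
      by (simp only: zb_def)
    also have "\<dots> = P / (q 0 / q 2)" by (simp only: ee y2 P_def)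
    finally show ?thesis .
  qed
  show ?thesis
    apply (subst m1, subst m2, subst zn, subst zb1)
    using qnz Pnz by (simp add: field_simps power2_eq_square)
qed

abbreviation sl :: "nat set \<Rightarrow> nat list" where "sl \<equiv> sorted_list_of_set"

definition dualT :: "nat \<Rightarrow> nat \<Rightarrow> nat set \<Rightarrow> nat set" where
  "dualT n f Y = {x. f \<le> x \<and> x \<le> 2*n+1-f \<and> 2*n+1-x \<notin> Y}"

definition midw :: "nat \<Rightarrow> nat set \<Rightarrow> nat list" where
  "midw n Z = sl {x\<in>Z. x \<le> n} @ [n, Suc n] @ sl {x\<in>Z. n < x}"

lemma sl_insert_min:
  fixes A :: "nat set"
  assumes "finite A" "\<forall>y\<in>A. x < y"
  shows "sl (insert x A) = x # sl A"
proof -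
  have "x \<notin> A" using assms by auto
  then show ?thesis using assms
    by (subst sorted_list_of_set_unique[symmetric]) auto
qed

lemma sl_insert_max:
  fixes A :: "nat set"
  assumes "finite A" "\<forall>y\<in>A. y < x"
  shows "sl (insert x A) = sl A @ [x]"
proof -
  have "x \<notin> A" using assms by auto
  then show ?thesis using assms
    by (subst sorted_list_of_set_unique[symmetric]) (auto simp: sorted_wrt_append)
qed

lemma card_dualT:
  assumes "Y \<subseteq> {f..2*n+1-f}" "f \<le> n"
  shows "card (dualT n f Y) = 2*(n-f+1) - card Y"
proof -
  have fin: "finite Y" using assms finite_subset by blast
  have Yb: "\<And>y. y \<in> Y \<Longrightarrow> f \<le> y \<and> y \<le> 2*n+1-f" using assms(1) by auto
  have e: "dualT n f Y = {f..2*n+1-f} - (\<lambda>x. 2*n+1-x) ` Y"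
  proof (rule set_eqI, rule iffI)
    fix x assume "x \<in> dualT n f Y"
    then have x: "f \<le> x" "x \<le> 2*n+1-f" "2*n+1-x \<notin> Y" unfolding dualT_def by auto
    have "x \<notin> (\<lambda>x. 2*n+1-x) ` Y"
    proof
      assume "x \<in> (\<lambda>x. 2*n+1-x) ` Y"
      then obtain y where y: "y \<in> Y" "x = 2*n+1-y" by auto
      then have "y \<le> 2*n+1-f" using assms by auto
      then have "2*n+1-x = y" using y(2) x assms by auto
      then show False using x y by auto
    qed
    then show "x \<in> {f..2*n+1-f} - (\<lambda>x. 2*n+1-x) ` Y" using x by auto
  next
    fix x assume x: "x \<in> {f..2*n+1-f} - (\<lambda>x. 2*n+1-x) ` Y"
    have "2*n+1-x \<notin> Y"
    proof
      assume "2*n+1-x \<in> Y"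
      moreover have "x = 2*n+1-(2*n+1-x)" using x assms by auto
      ultimately show False using x by blast
    qed
    then show "x \<in> dualT n f Y" using x unfolding dualT_def by auto
  qed
  have inj: "inj_on (\<lambda>x. 2*n+1-x) Y"
    unfolding inj_on_def
  proof (intro ballI impI)
    fix x y assume "x \<in> Y" "y \<in> Y" "2*n+1-x = 2*n+1-y"
    moreover have "x \<in> {f..2*n+1-f}" "y \<in> {f..2*n+1-f}" using assms(1) \<open>x \<in> Y\<close> \<open>y \<in> Y\<close> by blast+
    then have "x \<le> 2*n+1" "y \<le> 2*n+1" by auto
    ultimately show "x = y" by linarith
  qed
  have sub: "(\<lambda>x. 2*n+1-x) ` Y \<subseteq> {f..2*n+1-f}"
  proof
    fix z assume "z \<in> (\<lambda>x. 2*n+1-x) ` Y"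
    then obtain y where "y \<in> Y" "z = 2*n+1-y" by auto
    then show "z \<in> {f..2*n+1-f}" using Yb[of y] assms(2) by auto
  qed
  have "card (dualT n f Y) = card {f..2*n+1-f} - card ((\<lambda>x. 2*n+1-x) ` Y)"
    unfolding e by (rule card_Diff_subset) (use fin sub in auto)
  also have "\<dots> = 2*(n-f+1) - card Y" using card_image[OF inj] assms by simp
  finally show ?thesis .
qed

abbreviation W :: "nat \<Rightarrow> (nat \<Rightarrow> complex \<Rightarrow> complex) \<Rightarrow> nat list \<Rightarrow> complex \<Rightarrow> complex" where
  "W n Q \<equiv> Wg (zJ n Q)"

lemma Rlem:
  assumes Qnz: "\<forall>b\<in>{1..n}. \<forall>v. Q b v \<noteq> 0" and f1: "1 \<le> f" and fn: "f < n"
    and len: "D + length Z = n - f + 1"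
  shows "W n Q (replicate D f @ Z @ replicate D (2*n+1-f)) v
       = W n Q (replicate D (f+1) @ Z @ replicate D (2*n-f)) v"
proof -
  have lc: "of_nat D + of_nat (length Z) = (of_nat n - of_nat f + 1 :: complex)"
  proof -
    have "of_nat (D + length Z) = (of_nat (n - f + 1) :: complex)" using len by simp
    then show ?thesis using fn by (simp add: of_nat_diff)
  qed
  have ar: "v - of_nat D - of_nat (length Z) - of_nat i = (v - of_nat i) - (of_nat n - of_nat f + 1)" for i
  proof -
    have "v - of_nat D - of_nat (length Z) - of_nat i = (v - of_nat i) - (of_nat D + of_nat (length Z))"
      by (simp add: algebra_simps)
    then show ?thesis using lc by simp
  qed
  have "W n Q (replicate D f @ Z @ replicate D (2*n+1-f)) v
      = W n Q Z (v - of_nat D) * (\<Prod>i<D. zJ n Q f (v - of_nat i) * zJ n Q (2*n+1-f) ((v - of_nat i) - (of_nat n - of_nat f + 1)))"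
    by (simp add: Wg_append Wg_replicate prod.distrib ar)
  also have "\<dots> = W n Q Z (v - of_nat D) * (\<Prod>i<D. zJ n Q (f+1) (v - of_nat i) * zJ n Q (2*n-f) ((v - of_nat i) - (of_nat n - of_nat f + 1)))"
    using I1[OF Qnz f1 fn] by simp
  also have "\<dots> = W n Q (replicate D (f+1) @ Z @ replicate D (2*n-f)) v"
    by (simp add: Wg_append Wg_replicate prod.distrib ar)
  finally show ?thesis .
qed

lemma W_mid_cong:
  assumes "Wg g M1 (v - of_nat (length A)) = Wg g M2 (v - of_nat (length A))" "length M1 = length M2"
  shows "Wg g (A @ M1 @ B) v = Wg g (A @ M2 @ B) v"
  using assms by (simp add: Wg_append)

lemma length_midw: "finite Z \<Longrightarrow> length (midw n Z) = card Z + 2"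
proof -
  assume fz: "finite Z"
  have "card Z = card {x\<in>Z. x \<le> n} + card {x\<in>Z. n < x}"
  proof -
    have "Z = {x\<in>Z. x \<le> n} \<union> {x\<in>Z. n < x}" by auto
    then have "card Z = card ({x\<in>Z. x \<le> n} \<union> {x\<in>Z. n < x})" by simp
    also have "\<dots> = card {x\<in>Z. x \<le> n} + card {x\<in>Z. n < x}"
      by (rule card_Un_disjoint) (use fz in auto)
    finally show ?thesis .
  qed
  then show ?thesis by (simp add: midw_def)
qed

lemma Tbase:
  assumes "Y \<subseteq> {n..2*n+1-n}" "card Y + k1 = n - n + 2 + k2"
  shows "replicate k1 n @ sl Y @ replicate k1 (2*n+1-n) = replicate k2 n @ midw n (dualT n n Y) @ replicate k2 (2*n+1-n)"
proof -
  have Ysub: "Y \<subseteq> {n, Suc n}" using assms(1) by auto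
  have d: "dualT n n Y = {x. n \<le> x \<and> x \<le> Suc n \<and> 2*n+1-x \<notin> Y}" by (simp add: dualT_def)
  have e1: "{x. n \<le> x \<and> x \<le> Suc n \<and> P x} = (if P n then {n} else {}) \<union> (if P (Suc n) then {Suc n} else {})" for P
    by (auto simp: le_Suc_eq)
  have sl2: "sl {n, Suc n} = [n, Suc n]" by (simp add: sl_insert_min)
  have mw: "midw n Z = sl {x\<in>Z. x \<le> n} @ [n, Suc n] @ sl {x\<in>Z. n < x}" for Z by (simp add: midw_def)
  consider "Y = {}" | "Y = {n}" | "Y = {Suc n}" | "Y = {n, Suc n}" using Ysub by blast
  then show ?thesis
  proof cases
    case 1
    then have k: "k1 = Suc (Suc k2)" using assms by simp
    have a: "{x\<in>dualT n n Y. x \<le> n} = {n}" "{x\<in>dualT n n Y. n < x} = {Suc n}"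
      using 1 by (auto simp: dualT_def le_Suc_eq)
    show ?thesis unfolding mw a k using 1 by (simp add: replicate_app_Cons_same)
  next
    case 2
    then have k: "k1 = Suc k2" using assms by simp
    have a: "{x\<in>dualT n n Y. x \<le> n} = {n}" "{x\<in>dualT n n Y. n < x} = {}"
      using 2 by (auto simp: dualT_def le_Suc_eq)
    show ?thesis unfolding mw a k using 2 by (simp add: replicate_app_Cons_same)
  next
    case 3
    then have k: "k1 = Suc k2" using assms by simp
    have a: "{x\<in>dualT n n Y. x \<le> n} = {}" "{x\<in>dualT n n Y. n < x} = {Suc n}"
      using 3 by (auto simp: dualT_def le_Suc_eq)
    show ?thesis unfolding mw a k using 3 by (simp add: replicate_app_Cons_same)
  next
    case 4
    then have k: "k1 = k2" using assms by simp
    have a: "{x\<in>dualT n n Y. x \<le> n} = {}" "{x\<in>dualT n n Y. n < x} = {}"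
      using 4 by (auto simp: dualT_def le_Suc_eq)
    show ?thesis unfolding mw a k using 4 sl2 by simp
  qed
qed

lemma sl_decomp:
  assumes "Y \<subseteq> {f..g}" "f < g"
  shows "sl Y = (if f\<in>Y then [f] else []) @ sl {x\<in>Y. f<x \<and> x<g} @ (if g\<in>Y then [g] else [])"
proof -
  define Y0 where "Y0 = {x\<in>Y. f<x \<and> x<g}"
  have fin: "finite Y0" "finite Y" using assms(1) finite_subset unfolding Y0_def by auto
  have Yb: "\<And>y. y \<in> Y \<Longrightarrow> f \<le> y \<and> y \<le> g" using assms(1) by auto
  have Ye: "Y = (if f\<in>Y then {f} else {}) \<union> Y0 \<union> (if g\<in>Y then {g} else {})"
    unfolding Y0_def using Yb by (auto simp: le_less)
  have m1: "\<forall>y\<in>Y0. f < y" "\<forall>y\<in>Y0. y < g" unfolding Y0_def by auto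
  show ?thesis
  proof (cases "f \<in> Y"; cases "g \<in> Y")
    assume "f \<in> Y" "g \<in> Y"
    then have "Y = insert f (insert g Y0)" using Ye by auto
    moreover have "sl (insert g Y0) = sl Y0 @ [g]" using fin m1 by (intro sl_insert_max) auto
    moreover have "sl (insert f (insert g Y0)) = f # sl (insert g Y0)"
      using fin m1 assms(2) by (intro sl_insert_min) auto
    ultimately show ?thesis using \<open>f \<in> Y\<close> \<open>g \<in> Y\<close> unfolding Y0_def by simp
  next
    assume "f \<in> Y" "g \<notin> Y"
    then have "Y = insert f Y0" using Ye by auto
    moreover have "sl (insert f Y0) = f # sl Y0" using fin m1 by (intro sl_insert_min) auto
    ultimately show ?thesis using \<open>f \<in> Y\<close> \<open>g \<notin> Y\<close> unfolding Y0_def by simp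
  next
    assume "f \<notin> Y" "g \<in> Y"
    then have "Y = insert g Y0" using Ye by auto
    moreover have "sl (insert g Y0) = sl Y0 @ [g]" using fin m1 by (intro sl_insert_max) auto
    ultimately show ?thesis using \<open>f \<notin> Y\<close> \<open>g \<in> Y\<close> unfolding Y0_def by simp
  next
    assume "f \<notin> Y" "g \<notin> Y"
    then have "Y = Y0" using Ye by auto
    then show ?thesis using \<open>f \<notin> Y\<close> \<open>g \<notin> Y\<close> unfolding Y0_def by simp
  qed
qed

lemma dualT_decomp:
  assumes "Y \<subseteq> {f..2*n+1-f}" "f < n"
  shows "dualT n f Y = (if 2*n+1-f \<in> Y then {} else {f}) \<union> dualT n (f+1) {x\<in>Y. f<x \<and> x<2*n+1-f}
           \<union> (if f \<in> Y then {} else {2*n+1-f})"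
proof -
  have Yb: "\<And>y. y \<in> Y \<Longrightarrow> f \<le> y \<and> y \<le> 2*n+1-f" using assms(1) by auto
  show ?thesis
  proof (rule set_eqI)
    fix x
    show "x \<in> dualT n f Y \<longleftrightarrow> x \<in> (if 2*n+1-f \<in> Y then {} else {f}) \<union> dualT n (f+1) {x\<in>Y. f<x \<and> x<2*n+1-f}
           \<union> (if f \<in> Y then {} else {2*n+1-f})"
    proof (cases "x = f \<or> x = 2*n+1-f")
      case True
      then show ?thesis using assms(2) by (auto simp: dualT_def)
    next
      case False
      then show ?thesis using assms(2) by (auto simp: dualT_def)
    qed
  qed
qed

lemma midw_decomp:
  assumes "Y \<subseteq> {f..2*n+1-f}" "f < n"
  shows "midw n (dualT n f Y) = (if 2*n+1-f \<in> Y then [] else [f]) @ midw n (dualT n (f+1) {x\<in>Y. f<x \<and> x<2*n+1-f})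
           @ (if f \<in> Y then [] else [2*n+1-f])"
proof -
  define Z where "Z = dualT n (f+1) {x\<in>Y. f<x \<and> x<2*n+1-f}"
  have Zb: "\<And>z. z \<in> Z \<Longrightarrow> f < z \<and> z < 2*n+1-f" unfolding Z_def dualT_def by auto
  have finZ: "finite Z" unfolding Z_def dualT_def by (rule finite_subset[of _ "{..2*n+1}"]) auto
  have D: "dualT n f Y = (if 2*n+1-f \<in> Y then {} else {f}) \<union> Z \<union> (if f \<in> Y then {} else {2*n+1-f})"
    unfolding Z_def by (rule dualT_decomp[OF assms])
  have lo: "{x\<in>dualT n f Y. x \<le> n} = (if 2*n+1-f \<in> Y then {} else {f}) \<union> {x\<in>Z. x \<le> n}"
    unfolding D using assms(2) by auto
  have hi: "{x\<in>dualT n f Y. n < x} = {x\<in>Z. n < x} \<union> (if f \<in> Y then {} else {2*n+1-f})"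
    unfolding D using assms(2) by auto
  have slo: "sl {x\<in>dualT n f Y. x \<le> n} = (if 2*n+1-f \<in> Y then [] else [f]) @ sl {x\<in>Z. x \<le> n}"
  proof (cases "2*n+1-f \<in> Y")
    case True then show ?thesis unfolding lo by simp
  next
    case False
    then have "sl {x\<in>dualT n f Y. x \<le> n} = sl (insert f {x\<in>Z. x \<le> n})" unfolding lo by simp
    also have "\<dots> = f # sl {x\<in>Z. x \<le> n}" using finZ Zb by (intro sl_insert_min) auto
    finally show ?thesis using False by simp
  qed
  have shi: "sl {x\<in>dualT n f Y. n < x} = sl {x\<in>Z. n < x} @ (if f \<in> Y then [] else [2*n+1-f])"
  proof (cases "f \<in> Y")
    case True then show ?thesis unfolding hi by simp
  next
    case False
    then have "sl {x\<in>dualT n f Y. n < x} = sl (insert (2*n+1-f) {x\<in>Z. n < x})" unfolding hi by simp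
    also have "\<dots> = sl {x\<in>Z. n < x} @ [2*n+1-f]" using finZ Zb by (intro sl_insert_max) auto
    finally show ?thesis using False by simp
  qed
  show ?thesis unfolding midw_def slo shi Z_def by simp
qed

lemma Tlem:
  assumes Qnz: "\<forall>b\<in>{1..n}. \<forall>v. Q b v \<noteq> 0"
  shows "n - f = m \<Longrightarrow> 1 \<le> f \<Longrightarrow> f \<le> n \<Longrightarrow> Y \<subseteq> {f..2*n+1-f} \<Longrightarrow> card Y + k1 = n - f + 2 + k2 \<Longrightarrow>
    W n Q (replicate k1 f @ sl Y @ replicate k1 (2*n+1-f)) v
  = W n Q (replicate k2 f @ midw n (dualT n f Y) @ replicate k2 (2*n+1-f)) v"
proof (induction m arbitrary: f k1 k2 Y v)
  case 0
  then have "f = n" by simp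
  then show ?case using Tbase[of Y n k1 k2] 0 by simp
next
  case (Suc m)
  have fn: "f < n" and f1: "1 \<le> f" using Suc by auto
  define g where "g = 2*n+1-f"
  define Y0 where "Y0 = {x\<in>Y. f<x \<and> x<g}"
  define al where "al = (if f \<in> Y then 1 else 0::nat)"
  define be where "be = (if g \<in> Y then 1 else 0::nat)"
  have al1: "al \<le> 1" and be1: "be \<le> 1" unfolding al_def be_def by auto
  have Ysub: "Y \<subseteq> {f..g}" using Suc unfolding g_def by simp
  have Y0sub: "Y0 \<subseteq> {f+1..2*n+1-(f+1)}" unfolding Y0_def g_def by auto
  have finY0: "finite Y0" using Y0sub finite_subset by blast
  have sY: "sl Y = replicate al f @ sl Y0 @ replicate be g"
    using sl_decomp[OF Ysub] fn unfolding Y0_def al_def be_def g_def by simp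
  have cardY: "card Y = al + card Y0 + be"
  proof -
    have "finite Y" using Ysub finite_subset by blast
    then have "card Y = length (sl Y)" by simp
    also have "\<dots> = al + card Y0 + be" unfolding sY using finY0 by simp
    finally show ?thesis .
  qed
  define Z0 where "Z0 = midw n (dualT n (f+1) Y0)"
  have mY: "midw n (dualT n f Y) = replicate (1-be) f @ Z0 @ replicate (1-al) g"
    using midw_decomp[OF _ fn, of Y] Suc(5) unfolding Y0_def al_def be_def g_def Z0_def by simp
  have cY0le: "card Y0 \<le> 2*(n-f)"
  proof -
    have "card Y0 \<le> card {f+1..2*n+1-(f+1)}" using Y0sub by (intro card_mono) auto
    then show ?thesis using fn by simp
  qed
  have finD: "finite (dualT n (f+1) Y0)" unfolding dualT_def by (rule finite_subset[of _ "{..2*n+1}"]) auto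
  have lenZ0: "length Z0 = 2*(n-f) - card Y0 + 2"
    unfolding Z0_def using length_midw[OF finD] card_dualT[OF Y0sub] fn by simp
  have IH: "\<And>k1 k2 Y v. Y \<subseteq> {f+1..2*n+1-(f+1)} \<Longrightarrow> card Y + k1 = n - (f+1) + 2 + k2 \<Longrightarrow>
      W n Q (replicate k1 (f+1) @ sl Y @ replicate k1 (2*n+1-(f+1))) v
    = W n Q (replicate k2 (f+1) @ midw n (dualT n (f+1) Y) @ replicate k2 (2*n+1-(f+1))) v"
    using Suc.IH[of "f+1"] Suc.prems fn by simp
  have g2: "2*n+1-(f+1) = 2*n-f" by simp
  have cc: "card Y0 + al + be + k1 = n - f + 2 + k2" using Suc.prems(5) cardY by simp
  have lhs: "replicate k1 f @ sl Y @ replicate k1 g = replicate (k1+al) f @ sl Y0 @ replicate (k1+be) g"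
    by (simp add: sY replicate_add) (metis add.commute replicate_add)
  have rhs: "replicate k2 f @ midw n (dualT n f Y) @ replicate k2 g = replicate (k2+(1-be)) f @ Z0 @ replicate (k2+(1-al)) g"
    by (simp add: mY replicate_add) (metis add.commute replicate_add)
  show ?case
  proof (cases "k2 + (1-be) \<le> k1 + al")
    case True
    define D where "D = k1 + al - (k2 + (1-be))"
    have L: "replicate (k1+al) f @ sl Y0 @ replicate (k1+be) g
       = replicate (k2+(1-be)) f @ (replicate D f @ sl Y0 @ replicate D g) @ replicate (k2+(1-al)) g"
    proof -
      have "k1+al = (k2+(1-be)) + D" "k1+be = D + (k2+(1-al))" using True al1 be1 unfolding D_def by auto
      then show ?thesis by (simp add: replicate_add)
    qed
    have c1: "D + length (sl Y0) = n - f + 1" using cc True al1 be1 finY0 unfolding D_def by simp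
    have "W n Q (replicate D f @ sl Y0 @ replicate D g) w = W n Q (replicate D (f+1) @ sl Y0 @ replicate D (2*n-f)) w" for w
      unfolding g_def by (rule Rlem[OF Qnz f1 fn c1])
    also have "\<dots> w = W n Q (replicate 0 (f+1) @ midw n (dualT n (f+1) Y0) @ replicate 0 (2*n+1-(f+1))) w" for w
    proof -
      have c2: "card Y0 + D = n - (f+1) + 2 + 0" using c1 finY0 fn by simp
      show ?thesis using IH[OF Y0sub c2, of w] unfolding g2 by simp
    qed
    finally have e: "W n Q (replicate D f @ sl Y0 @ replicate D g) w = W n Q Z0 w" for w unfolding Z0_def by simp
    have len: "length (replicate D f @ sl Y0 @ replicate D g) = length Z0"
      using lenZ0 c1 cY0le finY0 by simp
    show ?thesis
      unfolding g_def[symmetric] lhs rhs L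
      by (rule W_mid_cong[OF e len])
  next
    case False
    define E where "E = k2 + (1-be) - (k1 + al)"
    have R: "replicate (k2+(1-be)) f @ Z0 @ replicate (k2+(1-al)) g
       = replicate (k1+al) f @ (replicate E f @ Z0 @ replicate E g) @ replicate (k1+be) g"
    proof -
      have "k2+(1-be) = (k1+al) + E" "k2+(1-al) = E + (k1+be)" using False al1 be1 unfolding E_def by auto
      then show ?thesis by (simp add: replicate_add)
    qed
    have c1: "E + length Z0 = n - f + 1" using cc False al1 be1 lenZ0 cY0le unfolding E_def by simp
    have "W n Q (replicate E f @ Z0 @ replicate E g) w = W n Q (replicate E (f+1) @ Z0 @ replicate E (2*n-f)) w" for w
      unfolding g_def by (rule Rlem[OF Qnz f1 fn c1])
    also have "\<dots> w = W n Q (replicate 0 (f+1) @ sl Y0 @ replicate 0 (2*n+1-(f+1))) w" for w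
    proof -
      have c2: "card Y0 + 0 = n - (f+1) + 2 + E" using cc False al1 be1 fn unfolding E_def by simp
      show ?thesis using IH[OF Y0sub c2, of w] unfolding g2 Z0_def by simp
    qed
    finally have e: "W n Q (sl Y0) w = W n Q (replicate E f @ Z0 @ replicate E g) w" for w by simp
    have len: "length (sl Y0) = length (replicate E f @ Z0 @ replicate E g)"
    proof -
      have "length (sl Y0) = card Y0" using finY0 by simp
      moreover have "length (replicate E f @ Z0 @ replicate E g) = E + length Z0 + E" by simp
      moreover have "card Y0 = n - f + 1 + E" using cc False al1 be1 fn unfolding E_def by linarith
      ultimately show ?thesis using c1 by linarith
    qed
    show ?thesis
      unfolding g_def[symmetric] lhs rhs R
      by (rule W_mid_cong[OF e len])
  qed
qed

definition win :: "nat \<Rightarrow> nat \<Rightarrow> nat set" where "win n c = {x. c < x \<and> x < 2*n+1-c}"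
definition betw :: "nat \<Rightarrow> nat \<Rightarrow> nat set \<Rightarrow> nat set" where "betw n c Z = Z \<inter> win n c"
definition flip :: "nat \<Rightarrow> nat \<Rightarrow> nat set \<Rightarrow> nat set" where "flip n c Z = {x\<in>win n c. 2*n+1-x \<notin> Z}"
definition outs :: "nat \<Rightarrow> nat \<Rightarrow> nat set \<Rightarrow> nat set" where "outs n c Z = {x\<in>Z. x < c \<or> 2*n+1-c < x}"
definition viol :: "nat \<Rightarrow> nat set \<Rightarrow> nat \<Rightarrow> bool" where
  "viol n X c \<longleftrightarrow> c \<in> {1..n} \<and> c \<in> X \<and> 2*n+1-c \<in> X \<and> n - c \<le> card (betw n c X)"
definition cand :: "nat \<Rightarrow> nat set \<Rightarrow> nat \<Rightarrow> bool" where
  "cand n M d \<longleftrightarrow> d \<in> {1..n} \<and> d \<notin> M \<and> 2*n+1-d \<notin> M \<and> card (betw n d M) = n - d"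

lemma win_mir: "x \<in> win n c \<Longrightarrow> 2*n+1-x \<in> win n c \<and> 2*n+1-(2*n+1-x) = x"
  unfolding win_def by auto

lemma finite_win: "finite (win n c)" unfolding win_def by (rule finite_subset[of _ "{..2*n+1}"]) auto

lemma card_win: "c \<le> n \<Longrightarrow> card (win n c) = 2*(n-c)"
proof -
  assume "c \<le> n"
  have "win n c = {c<..<2*n+1-c}" unfolding win_def by auto
  then show ?thesis using \<open>c \<le> n\<close> by simp
qed

lemma card_flip:
  assumes "c \<le> n"
  shows "card (flip n c Z) = 2*(n-c) - card (betw n c Z)"
proof -
  let ?m = "\<lambda>x. 2*n+1-x"
  have e: "flip n c Z = win n c - ?m ` (betw n c Z)"
  proof (rule set_eqI, rule iffI)
    fix x assume x: "x \<in> flip n c Z"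
    then have xw: "x \<in> win n c" and xz: "?m x \<notin> Z" unfolding flip_def by auto
    have "x \<notin> ?m ` (betw n c Z)"
    proof
      assume "x \<in> ?m ` (betw n c Z)"
      then obtain y where y: "y \<in> Z" "y \<in> win n c" "x = ?m y" unfolding betw_def by auto
      then have "?m x = y" using win_mir[OF y(2)] by simp
      then show False using xz y by simp
    qed
    then show "x \<in> win n c - ?m ` (betw n c Z)" using xw by simp
  next
    fix x assume x: "x \<in> win n c - ?m ` (betw n c Z)"
    then have xw: "x \<in> win n c" by simp
    have "?m x \<notin> Z"
    proof
      assume "?m x \<in> Z"
      then have "?m x \<in> betw n c Z" using win_mir[OF xw] unfolding betw_def by simp
      then have "?m (?m x) \<in> ?m ` betw n c Z" by simp
      then show False using x win_mir[OF xw] by simp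
    qed
    then show "x \<in> flip n c Z" using xw unfolding flip_def by simp
  qed
  have inj: "inj_on ?m (betw n c Z)"
    unfolding inj_on_def betw_def using win_mir by (metis IntD2)
  have sub: "?m ` (betw n c Z) \<subseteq> win n c" unfolding betw_def using win_mir by auto
  have "card (flip n c Z) = card (win n c) - card (?m ` (betw n c Z))"
    unfolding e by (rule card_Diff_subset) (use sub finite_subset[OF sub finite_win] in auto)
  then show ?thesis using card_image[OF inj] card_win[OF assms] by simp
qed

lemma flip_flip: "flip n c (flip n c Z) = betw n c Z"
  unfolding flip_def betw_def using win_mir by auto

lemma flip_cong: "betw n c Z = betw n c Z' \<Longrightarrow> flip n c Z = flip n c Z'"
  unfolding flip_def betw_def using win_mir by auto

lemma betw_flip: "betw n c (flip n c Z) = flip n c Z"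
  unfolding flip_def betw_def by auto

lemma card_decomp:
  assumes "finite Z" "c \<le> n"
  shows "card Z = card (outs n c Z) + card (Z \<inter> {c, 2*n+1-c}) + card (betw n c Z)"
proof -
  have e: "Z = outs n c Z \<union> (Z \<inter> {c, 2*n+1-c}) \<union> betw n c Z"
    unfolding outs_def betw_def win_def by auto
  have "card Z = card (outs n c Z \<union> (Z \<inter> {c, 2*n+1-c}) \<union> betw n c Z)" using e by simp
  also have "\<dots> = card (outs n c Z \<union> (Z \<inter> {c, 2*n+1-c})) + card (betw n c Z)"
    by (rule card_Un_disjoint) (use assms in \<open>auto simp: outs_def betw_def win_def\<close>)
  also have "card (outs n c Z \<union> (Z \<inter> {c, 2*n+1-c})) = card (outs n c Z) + card (Z \<inter> {c, 2*n+1-c})"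
    by (rule card_Un_disjoint) (use assms in \<open>auto simp: outs_def\<close>)
  finally show ?thesis .
qed

lemma betw_step:
  assumes "finite Z" "1 \<le> d" "d \<le> n"
  shows "card (betw n (d-1) Z) = card (betw n d Z) + (if d \<in> Z then 1 else 0) + (if 2*n+1-d \<in> Z then 1 else 0)"
proof -
  have e: "betw n (d-1) Z = betw n d Z \<union> (Z \<inter> {d}) \<union> (Z \<inter> {2*n+1-d})"
    unfolding betw_def win_def using assms by auto
  have "card (betw n (d-1) Z) = card (betw n d Z \<union> (Z \<inter> {d})) + card (Z \<inter> {2*n+1-d})"
    unfolding e by (rule card_Un_disjoint) (use assms in \<open>auto simp: betw_def win_def\<close>)
  also have "card (betw n d Z \<union> (Z \<inter> {d})) = card (betw n d Z) + card (Z \<inter> {d})"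
    by (rule card_Un_disjoint) (use assms in \<open>auto simp: betw_def win_def\<close>)
  finally show ?thesis by (auto simp: Int_insert_right)
qed

lemma betw_nn: "betw n n Z = {}" unfolding betw_def win_def by auto

lemma maxviol_exact:
  assumes fin: "finite X" and v: "viol n X c" and mx: "\<forall>d. viol n X d \<longrightarrow> d \<le> c"
  shows "card (betw n c X) = n - c"
proof (rule ccontr)
  assume "card (betw n c X) \<noteq> n - c"
  then have gt: "n - c < card (betw n c X)" using v unfolding viol_def by simp
  have cn: "1 \<le> c" "c \<le> n" using v unfolding viol_def by auto
  define S where "S = {d\<in>{c..n}. n - d < card (betw n d X)}"
  have cS: "c \<in> S" unfolding S_def using gt cn by simp
  have finS: "finite S" unfolding S_def by simp
  define d' where "d' = Max S"
  have d'S: "d' \<in> S" unfolding d'_def using cS finS Max_in by blast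
  have d'ge: "c \<le> d'" unfolding d'_def using cS finS by simp
  have d'n: "d' \<noteq> n" using d'S unfolding S_def by (auto simp: betw_nn)
  then have d'lt: "d' < n" using d'S unfolding S_def by simp
  have notS: "d'+1 \<notin> S"
  proof
    assume "d'+1 \<in> S"
    then have "d'+1 \<le> d'" unfolding d'_def using finS by simp
    then show False by simp
  qed
  then have le: "card (betw n (d'+1) X) \<le> n - (d'+1)" unfolding S_def using d'ge d'lt by auto
  have st: "card (betw n d' X) = card (betw n (d'+1) X) + (if d'+1 \<in> X then 1 else 0) + (if 2*n+1-(d'+1) \<in> X then 1 else 0)"
    using betw_step[OF fin, of "d'+1" n] d'lt by simp
  have gt': "n - d' < card (betw n d' X)" using d'S unfolding S_def by simp
  have "d'+1 \<in> X" "2*n+1-(d'+1) \<in> X" "n - (d'+1) \<le> card (betw n (d'+1) X)"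
    using st le gt' d'lt by (auto split: if_splits)
  then have "viol n X (d'+1)" unfolding viol_def using d'lt by simp
  then have "d'+1 \<le> c" using mx by blast
  then show False using d'ge by simp
qed

lemma cand_exists:
  assumes sub: "M \<subseteq> {1..2*n}" and cM: "card M < n"
  shows "\<exists>d. cand n M d"
proof -
  have fin: "finite M" using sub finite_subset by blast
  define S where "S = {d\<in>{0..n}. card (betw n d M) < n - d}"
  have b0: "betw n 0 M = M" unfolding betw_def win_def using sub by auto
  have S0: "0 \<in> S" unfolding S_def using b0 cM by simp
  have finS: "finite S" unfolding S_def by simp
  define d' where "d' = Max S"
  have d'S: "d' \<in> S" unfolding d'_def using S0 finS Max_in by blast
  have d'n: "d' \<noteq> n" using d'S unfolding S_def by (auto simp: betw_nn)
  then have d'lt: "d' < n" using d'S unfolding S_def by simp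
  have notS: "d'+1 \<notin> S"
  proof
    assume "d'+1 \<in> S"
    then have "d'+1 \<le> d'" unfolding d'_def using finS by simp
    then show False by simp
  qed
  then have ge: "n - (d'+1) \<le> card (betw n (d'+1) M)" unfolding S_def using d'lt by auto
  have st: "card (betw n d' M) = card (betw n (d'+1) M) + (if d'+1 \<in> M then 1 else 0) + (if 2*n+1-(d'+1) \<in> M then 1 else 0)"
    using betw_step[OF fin, of "d'+1" n] d'lt by simp
  have lt: "card (betw n d' M) < n - d'" using d'S unfolding S_def by simp
  have "d'+1 \<notin> M" "2*n+1-(d'+1) \<notin> M" "card (betw n (d'+1) M) = n - (d'+1)"
    using st ge lt d'lt by (auto split: if_splits)
  then have "cand n M (d'+1)" unfolding cand_def using d'lt by simp
  then show ?thesis by blast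
qed

definition Pc :: "nat \<Rightarrow> nat \<Rightarrow> nat set \<Rightarrow> nat set" where "Pc n c X = outs n c X \<union> flip n c X"
definition Sc :: "nat \<Rightarrow> nat \<Rightarrow> nat set \<Rightarrow> nat set" where "Sc n c M = outs n c M \<union> {c, 2*n+1-c} \<union> flip n c M"

lemma flip_sub_win: "flip n c Z \<subseteq> win n c" unfolding flip_def by auto

lemma win_sub: "1 \<le> c \<Longrightarrow> win n c \<subseteq> {1..2*n}" unfolding win_def by auto

lemma win_mono: "c < d \<Longrightarrow> win n d \<subseteq> win n c" unfolding win_def by auto

lemma betw_le_win: "c \<le> n \<Longrightarrow> card (betw n c Z) \<le> 2*(n-c)"
  using card_mono[OF finite_win, of "betw n c Z" n c] card_win[of c n] unfolding betw_def by auto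

lemma outs_Pc: "outs n c (Pc n c X) = outs n c X"
  unfolding Pc_def outs_def flip_def win_def by auto

lemma outs_Sc: "c \<le> n \<Longrightarrow> outs n c (Sc n c M) = outs n c M"
  unfolding Sc_def outs_def flip_def win_def by auto

lemma betw_Pc: "betw n c (Pc n c X) = flip n c X"
  unfolding Pc_def betw_def outs_def flip_def win_def by auto

lemma betw_Sc: "betw n c (Sc n c M) = flip n c M"
  unfolding Sc_def betw_def outs_def flip_def win_def by auto

lemma betw_Pc_d: "c < d \<Longrightarrow> betw n d (Pc n c X) = flip n d X"
  unfolding Pc_def betw_def outs_def flip_def win_def by auto

lemma betw_Sc_d: "c < d \<Longrightarrow> d \<le> n \<Longrightarrow> betw n d (Sc n c M) = flip n d M"
  unfolding Sc_def betw_def outs_def flip_def win_def by auto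

lemma decomp_set: "Z = outs n c Z \<union> (Z \<inter> {c, 2*n+1-c}) \<union> betw n c Z"
  unfolding outs_def betw_def win_def by auto

lemma card_Pc:
  assumes "finite X" "c \<le> n"
  shows "card (Pc n c X) = card (outs n c X) + card (flip n c X)"
  unfolding Pc_def
  by (rule card_Un_disjoint) (use assms finite_subset[OF flip_sub_win finite_win] in \<open>auto simp: outs_def flip_def win_def\<close>)

lemma card_Sc:
  assumes "finite M" "c \<le> n"
  shows "card (Sc n c M) = card (outs n c M) + 2 + card (flip n c M)"
proof -
  have f1: "finite (outs n c M)" using assms unfolding outs_def by simp
  have f2: "finite (flip n c M)" using finite_subset[OF flip_sub_win finite_win] .
  have "card (Sc n c M) = card (outs n c M \<union> {c, 2*n+1-c}) + card (flip n c M)"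
    unfolding Sc_def by (rule card_Un_disjoint) (use f1 f2 assms in \<open>auto simp: outs_def flip_def win_def\<close>)
  moreover have "card (outs n c M \<union> {c, 2*n+1-c}) = card (outs n c M) + card {c, 2*n+1-c}"
    by (rule card_Un_disjoint) (use f1 assms in \<open>auto simp: outs_def\<close>)
  moreover have "card {c, 2*n+1-c} = 2" using assms by simp
  ultimately show ?thesis by simp
qed

lemma P_props:
  assumes sub: "X \<subseteq> {1..2*n}" and v: "viol n X c" and ex: "card (betw n c X) = n - c"
  shows "Pc n c X \<subseteq> {1..2*n}" "card (Pc n c X) + 2 = card X" "cand n (Pc n c X) c"
    "Sc n c (Pc n c X) = X"
    "(\<forall>d. viol n X d \<longrightarrow> d \<le> c) \<Longrightarrow> \<forall>d. cand n (Pc n c X) d \<longrightarrow> d \<le> c"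
proof -
  have c1: "1 \<le> c" "c \<le> n" "c \<in> X" "2*n+1-c \<in> X" using v unfolding viol_def by auto
  have fin: "finite X" using sub finite_subset by blast
  show "Pc n c X \<subseteq> {1..2*n}"
    unfolding Pc_def using sub flip_sub_win[of n c X] win_sub[OF c1(1), of n] unfolding outs_def by blast
  have cf: "card (flip n c X) = n - c" using card_flip[OF c1(2)] ex c1 by simp
  have cx: "card X = card (outs n c X) + 2 + (n - c)"
  proof -
    have "X \<inter> {c, 2*n+1-c} = {c, 2*n+1-c}" using c1 by auto
    moreover have "card {c, 2*n+1-c} = 2" using c1 by simp
    ultimately show ?thesis using card_decomp[OF fin c1(2)] ex by simp
  qed
  show "card (Pc n c X) + 2 = card X" using card_Pc[OF fin c1(2)] cf cx by simp
  show "cand n (Pc n c X) c" unfolding cand_def using c1 cf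
    by (simp add: betw_Pc) (auto simp: Pc_def outs_def flip_def win_def)
  show "Sc n c (Pc n c X) = X"
  proof -
    have "flip n c (Pc n c X) = flip n c (flip n c X)"
      by (rule flip_cong) (simp add: betw_Pc betw_flip)
    also have "\<dots> = betw n c X" by (rule flip_flip)
    finally have "Sc n c (Pc n c X) = outs n c X \<union> {c, 2*n+1-c} \<union> betw n c X"
      unfolding Sc_def outs_Pc by simp
    also have "\<dots> = X" using decomp_set[of X n c] c1 by auto
    finally show ?thesis .
  qed
  assume mx: "\<forall>d. viol n X d \<longrightarrow> d \<le> c"
  show "\<forall>d. cand n (Pc n c X) d \<longrightarrow> d \<le> c"
  proof (intro allI impI, rule ccontr)
    fix d assume cd: "cand n (Pc n c X) d" and "\<not> d \<le> c"
    then have dc: "c < d" by simp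
    have dn: "d \<le> n" using cd unfolding cand_def by simp
    have dw: "d \<in> win n c" unfolding win_def using dc dn by simp
    have "d \<notin> flip n c X" using cd unfolding cand_def Pc_def by simp
    then have m1: "2*n+1-d \<in> X" using dw unfolding flip_def by simp
    have "2*n+1-d \<notin> flip n c X" using cd unfolding cand_def Pc_def by simp
    then have m2: "d \<in> X" using win_mir[OF dw] unfolding flip_def by auto
    have "card (flip n d X) = n - d" using cd betw_Pc_d[OF dc] unfolding cand_def by simp
    then have "card (betw n d X) = n - d" using card_flip[OF dn, of X] betw_le_win[OF dn, of X] by simp
    then have "viol n X d" unfolding viol_def using m1 m2 dn dc c1 by simp
    then show False using mx dc by auto
  qed
qed

lemma S_props:
  assumes sub: "M \<subseteq> {1..2*n}" and cd: "cand n M c"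
  shows "Sc n c M \<subseteq> {1..2*n}" "card (Sc n c M) = card M + 2" "viol n (Sc n c M) c"
    "Pc n c (Sc n c M) = M"
    "(\<forall>d. cand n M d \<longrightarrow> d \<le> c) \<Longrightarrow> \<forall>d. viol n (Sc n c M) d \<longrightarrow> d \<le> c"
proof -
  have c1: "1 \<le> c" "c \<le> n" "c \<notin> M" "2*n+1-c \<notin> M" "card (betw n c M) = n - c"
    using cd unfolding cand_def by auto
  have fin: "finite M" using sub finite_subset by blast
  show "Sc n c M \<subseteq> {1..2*n}"
    unfolding Sc_def using sub flip_sub_win[of n c M] win_sub[OF c1(1), of n] c1 unfolding outs_def by auto
  have cf: "card (flip n c M) = n - c" using card_flip[OF c1(2)] c1 by simp
  have cm: "card M = card (outs n c M) + (n - c)"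
  proof -
    have "M \<inter> {c, 2*n+1-c} = {}" using c1 by auto
    then show ?thesis using card_decomp[OF fin c1(2)] c1 by simp
  qed
  show "card (Sc n c M) = card M + 2" using card_Sc[OF fin c1(2)] cf cm by simp
  show "viol n (Sc n c M) c" unfolding viol_def using c1 cf by (simp add: betw_Sc) (simp add: Sc_def)
  show "Pc n c (Sc n c M) = M"
  proof -
    have "flip n c (Sc n c M) = flip n c (flip n c M)"
      by (rule flip_cong) (simp add: betw_Sc betw_flip)
    also have "\<dots> = betw n c M" by (rule flip_flip)
    finally have "Pc n c (Sc n c M) = outs n c M \<union> betw n c M"
      unfolding Pc_def outs_Sc[OF c1(2)] by simp
    also have "\<dots> = M" using decomp_set[of M n c] c1 by auto
    finally show ?thesis .
  qed
  assume mx: "\<forall>d. cand n M d \<longrightarrow> d \<le> c"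
  show "\<forall>d. viol n (Sc n c M) d \<longrightarrow> d \<le> c"
  proof (intro allI impI, rule ccontr)
    let ?X = "Sc n c M"
    fix d assume vd: "viol n ?X d" and "\<not> d \<le> c"
    have finX: "finite ?X" using fin unfolding Sc_def outs_def using finite_subset[OF flip_sub_win finite_win] by auto
    have finV: "finite {e. viol n ?X e}" by (rule finite_subset[of _ "{1..n}"]) (auto simp: viol_def)
    define e where "e = Max {e. viol n ?X e}"
    have ve: "viol n ?X e" unfolding e_def using vd finV Max_in by blast
    have de: "d \<le> e" unfolding e_def using vd finV by simp
    have mxe: "\<forall>d. viol n ?X d \<longrightarrow> d \<le> e" unfolding e_def using finV by simp
    have exe: "card (betw n e ?X) = n - e" by (rule maxviol_exact[OF finX ve mxe])
    have ec: "c < e" using de \<open>\<not> d \<le> c\<close> by simp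
    have en: "e \<le> n" using ve unfolding viol_def by simp
    have ew: "e \<in> win n c" unfolding win_def using ec en by simp
    have "e \<in> ?X" using ve unfolding viol_def by simp
    then have "e \<in> flip n c M" using ew ec unfolding Sc_def outs_def win_def by auto
    then have m1: "2*n+1-e \<notin> M" unfolding flip_def by simp
    have "2*n+1-e \<in> ?X" using ve unfolding viol_def by simp
    moreover have "2*n+1-e \<in> win n c" using win_mir[OF ew] by simp
    ultimately have "2*n+1-e \<in> flip n c M" using ec en unfolding Sc_def outs_def win_def by auto
    then have m2: "e \<notin> M" using win_mir[OF ew] unfolding flip_def by auto
    have "card (flip n e M) = n - e" using exe betw_Sc_d[OF ec en] by simp
    then have "card (betw n e M) = n - e" using card_flip[OF en, of M] betw_le_win[OF en, of M] by simp
    then have "cand n M e" unfolding cand_def using m1 m2 en ec c1 by simp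
    then show False using mx ec by auto
  qed
qed

lemma sl_union:
  fixes A B :: "nat set"
  assumes "finite A" "finite B" "\<forall>a\<in>A. \<forall>b\<in>B. a < b"
  shows "sl (A \<union> B) = sl A @ sl B"
proof -
  have d: "A \<inter> B = {}" using assms(3) by auto
  have "card (A \<union> B) = card A + card B" using card_Un_disjoint[OF assms(1,2) d] .
  then show ?thesis using assms
    by (subst sorted_list_of_set_unique[symmetric]) (auto simp: sorted_wrt_append)
qed

lemma weight_eq:
  assumes Qnz: "\<forall>b\<in>{1..n}. \<forall>v. Q b v \<noteq> 0"
    and sub: "X \<subseteq> {1..2*n}" and v: "viol n X c" and ex: "card (betw n c X) = n - c"
  shows "W n Q (sl X) w = W n Q (midw n (Pc n c X)) w"
proof -
  have c1: "1 \<le> c" "c \<le> n" "c \<in> X" "2*n+1-c \<in> X" using v unfolding viol_def by auto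
  have fin: "finite X" using sub finite_subset by blast
  define A where "A = {x\<in>X. x < c}"
  define Y where "Y = {x\<in>X. c \<le> x \<and> x \<le> 2*n+1-c}"
  define C where "C = {x\<in>X. 2*n+1-c < x}"
  define F where "F = flip n c X"
  have finF: "finite F" unfolding F_def using finite_subset[OF flip_sub_win finite_win] .
  have sX: "sl X = sl A @ sl Y @ sl C"
  proof -
    have "X = A \<union> (Y \<union> C)" unfolding A_def Y_def C_def by auto
    then have "sl X = sl (A \<union> (Y \<union> C))" by simp
    also have "\<dots> = sl A @ sl (Y \<union> C)"
      by (rule sl_union) (use fin c1 in \<open>auto simp: A_def Y_def C_def\<close>)
    also have "sl (Y \<union> C) = sl Y @ sl C"
      by (rule sl_union) (use fin in \<open>auto simp: Y_def C_def\<close>)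
    finally show ?thesis .
  qed
  have Ysub: "Y \<subseteq> {c..2*n+1-c}" unfolding Y_def by auto
  have cY: "card Y = n - c + 2"
  proof -
    have "Y = {c, 2*n+1-c} \<union> betw n c X" unfolding Y_def betw_def win_def using c1 by auto
    moreover have "card ({c, 2*n+1-c} \<union> betw n c X) = card {c, 2*n+1-c} + card (betw n c X)"
      by (rule card_Un_disjoint) (use fin in \<open>auto simp: betw_def win_def\<close>)
    ultimately show ?thesis using ex c1 by simp
  qed
  have dY: "dualT n c Y = F"
  proof (rule set_eqI)
    fix x
    show "x \<in> dualT n c Y \<longleftrightarrow> x \<in> F"
    proof (cases "x = c \<or> x = 2*n+1-c")
      case True then show ?thesis using c1 unfolding dualT_def F_def flip_def win_def Y_def by auto
    next
      case False then show ?thesis using c1 unfolding dualT_def F_def flip_def win_def Y_def by auto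
    qed
  qed
  have T: "W n Q (sl Y) u = W n Q (midw n F) u" for u
    using Tlem[OF Qnz refl c1(1) c1(2) Ysub, of 0 0 u] cY dY by simp
  have mP: "midw n (Pc n c X) = sl A @ midw n F @ sl C"
  proof -
    have lo: "{x\<in>Pc n c X. x \<le> n} = A \<union> {x\<in>F. x \<le> n}"
      unfolding Pc_def A_def F_def outs_def flip_def win_def using c1 by auto
    have hi: "{x\<in>Pc n c X. n < x} = {x\<in>F. n < x} \<union> C"
      unfolding Pc_def C_def F_def outs_def flip_def win_def using c1 by auto
    have "sl {x\<in>Pc n c X. x \<le> n} = sl A @ sl {x\<in>F. x \<le> n}"
      unfolding lo by (rule sl_union) (use fin finF in \<open>auto simp: A_def F_def flip_def win_def\<close>)
    moreover have "sl {x\<in>Pc n c X. n < x} = sl {x\<in>F. n < x} @ sl C"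
      unfolding hi by (rule sl_union) (use fin finF in \<open>auto simp: C_def F_def flip_def win_def\<close>)
    ultimately show ?thesis unfolding midw_def by simp
  qed
  have len: "length (sl Y) = length (midw n F)"
  proof -
    have "card F = n - c" unfolding F_def using card_flip[OF c1(2)] ex c1 by simp
    then show ?thesis using cY length_midw[OF finF] Ysub finite_subset by auto
  qed
  show ?thesis unfolding sX mP by (rule W_mid_cong[OF T len])
qed

definition NA :: "nat \<Rightarrow> nat \<Rightarrow> nat set set" where
  "NA n a = {X. X \<subseteq> {1..2*n} \<and> card X = a \<and> (\<exists>c. viol n X c)}"
definition MS :: "nat \<Rightarrow> nat \<Rightarrow> nat set set" where
  "MS n a = {M. M \<subseteq> {1..2*n} \<and> card M + 2 = a}"

lemma core:
  assumes Qnz: "\<forall>b\<in>{1..n}. \<forall>v. Q b v \<noteq> 0" and an: "a \<le> n"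
  shows "(\<Sum>X\<in>NA n a. W n Q (sl X) w) = (\<Sum>M\<in>MS n a. W n Q (midw n M) w)"
proof (rule sum.reindex_bij_witness[where j = "\<lambda>X. Pc n (Max {c. viol n X c}) X"
                                   and i = "\<lambda>M. Sc n (Max {d. cand n M d}) M"])
  have finV: "finite {c. viol n X c}" for X by (rule finite_subset[of _ "{1..n}"]) (auto simp: viol_def)
  have finC: "finite {c. cand n M c}" for M by (rule finite_subset[of _ "{1..n}"]) (auto simp: cand_def)
  {
    fix X assume X: "X \<in> NA n a"
    define c where "c = Max {c. viol n X c}"
    have sub: "X \<subseteq> {1..2*n}" using X unfolding NA_def by simp
    have fin: "finite X" using sub finite_subset by blast
    have vc: "viol n X c" unfolding c_def using X finV Max_in unfolding NA_def by auto
    have mx: "\<forall>d. viol n X d \<longrightarrow> d \<le> c" unfolding c_def using finV by simp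
    have ex: "card (betw n c X) = n - c" by (rule maxviol_exact[OF fin vc mx])
    note PP = P_props[OF sub vc ex]
    have mc: "Max {d. cand n (Pc n c X) d} = c"
      by (rule Max_eqI) (use finC PP(3) PP(5)[OF mx] in auto)
    show "Sc n (Max {d. cand n (Pc n (Max {c. viol n X c}) X) d}) (Pc n (Max {c. viol n X c}) X) = X"
      unfolding c_def[symmetric] mc using PP(4) .
    show "Pc n (Max {c. viol n X c}) X \<in> MS n a"
      unfolding c_def[symmetric] MS_def using PP(1,2) X unfolding NA_def by simp
    show "W n Q (midw n (Pc n (Max {c. viol n X c}) X)) w = W n Q (sl X) w"
      unfolding c_def[symmetric] using weight_eq[OF Qnz sub vc ex] by simp
  }
  {
    fix M assume M: "M \<in> MS n a"
    have sub: "M \<subseteq> {1..2*n}" using M unfolding MS_def by simp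
    have cM: "card M < n" using M an unfolding MS_def by simp
    obtain d0 where d0: "cand n M d0" using cand_exists[OF sub cM] by blast
    define c where "c = Max {d. cand n M d}"
    have cc: "cand n M c" unfolding c_def using d0 finC Max_in by blast
    have mx: "\<forall>d. cand n M d \<longrightarrow> d \<le> c" unfolding c_def using finC by simp
    note SP = S_props[OF sub cc]
    have mv: "Max {d. viol n (Sc n c M) d} = c"
      by (rule Max_eqI) (use finV SP(3) SP(5)[OF mx] in auto)
    show "Pc n (Max {c. viol n (Sc n (Max {d. cand n M d}) M) c}) (Sc n (Max {d. cand n M d}) M) = M"
      unfolding c_def[symmetric] mv using SP(4) .
    show "Sc n (Max {d. cand n M d}) M \<in> NA n a"
      unfolding c_def[symmetric] NA_def using SP(1,2,3) M unfolding MS_def by auto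
  }
qed

definition incr :: "nat \<Rightarrow> nat set \<Rightarrow> (nat \<Rightarrow> nat) set" where
  "incr a A = {i \<in> {1..a} \<rightarrow>\<^sub>E A. \<forall>k\<in>{1..a}. \<forall>l\<in>{1..a}. k < l \<longrightarrow> i k < i l}"

lemma strict_rev:
  fixes i :: "nat \<Rightarrow> nat" and k m :: nat
  assumes st: "\<forall>k\<in>{1..a}. \<forall>l\<in>{1..a}. k < l \<longrightarrow> i k < i l" and "k \<in> {1..a}" "m \<in> {1..a}" "i k < i m"
  shows "k < m"
proof (rule ccontr)
  assume "\<not> k < m"
  then have "m < k \<or> m = k" by auto
  then show False
  proof
    assume "m < k" then have "i m < i k" using st assms by blast
    then show False using assms by simp
  next
    assume "m = k" then show False using assms by simp
  qed
qed

lemma strict_inj: fixes i :: "nat \<Rightarrow> nat" shows "\<forall>k\<in>{1..a}. \<forall>l\<in>{1..a}. k < l \<longrightarrow> i k < i l \<Longrightarrow> inj_on i {1..a}"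
proof (rule inj_onI)
  fix x y assume st: "\<forall>k\<in>{1..a}. \<forall>l\<in>{1..a}. k < l \<longrightarrow> i k < i l" and xy: "x \<in> {1..a}" "y \<in> {1..a}" "i x = i y"
  show "x = y"
  proof (rule linorder_cases[of x y])
    assume "x < y" then have "i x < i y" using st xy by blast
    then show ?thesis using xy by simp
  next
    assume "y < x" then have "i y < i x" using st xy by blast
    then show ?thesis using xy by simp
  qed
qed

lemma sum_incr_sets:
  fixes A :: "nat set" and G :: "nat list \<Rightarrow> 'b::comm_monoid_add"
  assumes finA: "finite A" and PR: "\<And>i. i \<in> incr a A \<Longrightarrow> P i \<longleftrightarrow> R (i ` {1..a})"
  shows "(\<Sum>i\<in>{i\<in>incr a A. P i}. G (map i [1..<1+a])) = (\<Sum>X\<in>{X. X \<subseteq> A \<and> card X = a \<and> R X}. G (sl X))"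
proof (rule sum.reindex_bij_witness[where j = "\<lambda>i. i ` {1..a}"
      and i = "\<lambda>X k. if k \<in> {1..a} then sl X ! (k - 1) else undefined"])
  fix i assume i: "i \<in> {i\<in>incr a A. P i}"
  then have st: "\<forall>k\<in>{1..a}. \<forall>l\<in>{1..a}. k < l \<longrightarrow> i k < i l" and ext: "i \<in> {1..a} \<rightarrow>\<^sub>E A"
    unfolding incr_def by auto
  have sm: "sl (i ` {1..a}) = map i [1..<1+a]" by (rule sorted_strict_image[OF st])
  show "(\<lambda>k. if k \<in> {1..a} then sl (i ` {1..a}) ! (k - 1) else undefined) = i"
  proof
    fix k show "(if k \<in> {1..a} then sl (i ` {1..a}) ! (k - 1) else undefined) = i k"
    proof (cases "k \<in> {1..a}")
      case True
      then have "[1..<1+a] ! (k - 1) = k" by (subst nth_upt) auto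
      moreover have "k - 1 < length [1..<1+a]" using True by auto
      ultimately have "map i [1..<1+a] ! (k - 1) = i k" by (simp del: upt_Suc)
      then show ?thesis using True unfolding sm by simp
    next
      case False then show ?thesis using ext by (auto simp: PiE_def extensional_def)
    qed
  qed
  have "card (i ` {1..a}) = a" using card_image[OF strict_inj[OF st]] by simp
  moreover have "i ` {1..a} \<subseteq> A" using ext by auto
  moreover have "R (i ` {1..a})" using i PR by auto
  ultimately show "i ` {1..a} \<in> {X. X \<subseteq> A \<and> card X = a \<and> R X}" by simp
  show "G (sl (i ` {1..a})) = G (map i [1..<1+a])" unfolding sm ..
next
  fix X assume X: "X \<in> {X. X \<subseteq> A \<and> card X = a \<and> R X}"
  have finX: "finite X" using X finA finite_subset by blast
  have len: "length (sl X) = a" using X finX by simp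
  define i where "i = (\<lambda>k. if k \<in> {1..a} then sl X ! (k - 1) else undefined)"
  have img: "i ` {1..a} = X"
  proof -
    have "i ` {1..a} = (\<lambda>j. sl X ! j) ` {..<a}"
    proof (rule set_eqI, rule iffI)
      fix x assume "x \<in> i ` {1..a}"
      then obtain k where "k \<in> {1..a}" "x = sl X ! (k-1)" unfolding i_def by auto
      then show "x \<in> (\<lambda>j. sl X ! j) ` {..<a}" by (intro image_eqI[of _ _ "k-1"]) auto
    next
      fix x assume "x \<in> (\<lambda>j. sl X ! j) ` {..<a}"
      then obtain j where "j < a" "x = sl X ! j" by auto
      then show "x \<in> i ` {1..a}" unfolding i_def by (intro image_eqI[of _ _ "j+1"]) auto
    qed
    also have "\<dots> = set (sl X)" using len by (auto simp: set_conv_nth)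
    also have "\<dots> = X" using finX by simp
    finally show ?thesis .
  qed
  show "i ` {1..a} = X" by (rule img)
  have st: "\<forall>k\<in>{1..a}. \<forall>l\<in>{1..a}. k < l \<longrightarrow> i k < i l"
  proof (intro ballI impI)
    fix k l assume kl: "k \<in> {1..a}" "l \<in> {1..a}" "k < l"
    have sw: "sorted_wrt (<) (sl X)" by simp
    have "sl X ! (k-1) < sl X ! (l-1)"
      by (rule sorted_wrt_nth_less[OF sw]) (use kl len in auto)
    then show "i k < i l" unfolding i_def using kl by simp
  qed
  have ext: "i \<in> {1..a} \<rightarrow>\<^sub>E A"
  proof -
    have "i k \<in> A" if "k \<in> {1..a}" for k
    proof -
      have "i k \<in> i ` {1..a}" using that by simp
      then show ?thesis using img X by auto
    qed
    then show ?thesis unfolding i_def by (auto simp: PiE_def extensional_def)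
  qed
  have "i \<in> incr a A" unfolding incr_def using st ext by simp
  moreover then have "P i" using PR img X by auto
  ultimately show "i \<in> {i\<in>incr a A. P i}" by simp
qed

lemma rank_between:
  fixes i :: "nat \<Rightarrow> nat" and k l :: nat
  assumes st: "\<forall>k\<in>{1..a}. \<forall>l\<in>{1..a}. k < l \<longrightarrow> i k < i l" and k: "k \<in> {1..a}" and l: "l \<in> {1..a}" and kl: "k < l"
  shows "card {x \<in> i ` {1..a}. i k < x \<and> x < i l} = l - k - 1"
proof -
  have "{x \<in> i ` {1..a}. i k < x \<and> x < i l} = i ` {k<..<l}"
  proof (rule set_eqI, rule iffI)
    fix x assume "x \<in> {x \<in> i ` {1..a}. i k < x \<and> x < i l}"
    then obtain m where m: "m \<in> {1..a}" "x = i m" "i k < i m" "i m < i l" by auto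
    have "k < m" using strict_rev[OF st k m(1) m(3)] .
    moreover have "m < l" using strict_rev[OF st m(1) l m(4)] .
    ultimately show "x \<in> i ` {k<..<l}" using m by auto
  next
    fix x assume "x \<in> i ` {k<..<l}"
    then obtain m where "k < m" "m < l" "x = i m" by auto
    then show "x \<in> {x \<in> i ` {1..a}. i k < x \<and> x < i l}" using st k l by auto
  qed
  moreover have "inj_on i {k<..<l}"
    by (rule inj_on_subset[OF strict_inj[OF st]]) (use k l in auto)
  ultimately show ?thesis by (simp add: card_image)
qed

lemma adm_iff:
  assumes i: "i \<in> incr a {1..2*n}"
  shows "(\<forall>k\<in>{1..a}. \<forall>l\<in>{1..a}. \<forall>c\<in>{1..n}. i k = c \<and> i l = 2 * n + 1 - c \<longrightarrow> int n + int k - int l \<ge> int c)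
     \<longleftrightarrow> \<not> (\<exists>c. viol n (i ` {1..a}) c)"
proof -
  have st: "\<forall>k\<in>{1..a}. \<forall>l\<in>{1..a}. k < l \<longrightarrow> i k < i l" using i unfolding incr_def by simp
  have key: "(\<exists>k\<in>{1..a}. \<exists>l\<in>{1..a}. i k = c \<and> i l = 2*n+1-c \<and> int n + int k - int l < int c)
        \<longleftrightarrow> viol n (i ` {1..a}) c" if c: "c \<in> {1..n}" for c
  proof
    assume "\<exists>k\<in>{1..a}. \<exists>l\<in>{1..a}. i k = c \<and> i l = 2*n+1-c \<and> int n + int k - int l < int c"
    then obtain k l where kl: "k \<in> {1..a}" "l \<in> {1..a}" "i k = c" "i l = 2*n+1-c" "int n + int k - int l < int c" by blast
    have "i k < i l" using kl c by auto
    then have "k < l" using strict_rev[OF st kl(1,2)] by simp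
    then have "card {x \<in> i ` {1..a}. c < x \<and> x < 2*n+1-c} = l - k - 1"
      using rank_between[OF st kl(1,2)] kl by simp
    then have "card (betw n c (i ` {1..a})) = l - k - 1" unfolding betw_def win_def by (simp add: Int_def conj_commute)
    moreover have "n - c \<le> l - k - 1" using kl \<open>k < l\<close> c by auto
    moreover have "c \<in> i ` {1..a}" "2*n+1-c \<in> i ` {1..a}"
      using imageI[OF kl(1), of i] imageI[OF kl(2), of i] kl(3,4) by simp_all
    ultimately show "viol n (i ` {1..a}) c" unfolding viol_def using c by auto
  next
    assume v: "viol n (i ` {1..a}) c"
    then obtain k l where kl: "k \<in> {1..a}" "l \<in> {1..a}" "i k = c" "i l = 2*n+1-c" unfolding viol_def by auto
    have "i k < i l" using kl c by auto
    then have "k < l" using strict_rev[OF st kl(1,2)] by simp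
    then have "card {x \<in> i ` {1..a}. c < x \<and> x < 2*n+1-c} = l - k - 1"
      using rank_between[OF st kl(1,2)] kl by simp
    then have "card (betw n c (i ` {1..a})) = l - k - 1" unfolding betw_def win_def by (simp add: Int_def conj_commute)
    then have "n - c \<le> l - k - 1" using v unfolding viol_def by simp
    then have "int n + int k - int l < int c" using \<open>k < l\<close> c by auto
    then show "\<exists>k\<in>{1..a}. \<exists>l\<in>{1..a}. i k = c \<and> i l = 2*n+1-c \<and> int n + int k - int l < int c"
      apply -
      apply (rule bexI[of _ k])
       apply (rule bexI[of _ l])
      using kl by auto
  qed
  have "\<not> (\<exists>c. viol n (i ` {1..a}) c) \<longleftrightarrow> (\<forall>c\<in>{1..n}. \<not> viol n (i ` {1..a}) c)"
    unfolding viol_def by auto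
  also have "\<dots> \<longleftrightarrow> (\<forall>c\<in>{1..n}. \<not> (\<exists>k\<in>{1..a}. \<exists>l\<in>{1..a}. i k = c \<and> i l = 2*n+1-c \<and> int n + int k - int l < int c))"
  proof (rule ball_cong[OF refl])
    fix c assume c: "c \<in> {1..n}"
    show "(\<not> viol n (i ` {1..a}) c) = (\<not> (\<exists>k\<in>{1..a}. \<exists>l\<in>{1..a}. i k = c \<and> i l = 2*n+1-c \<and> int n + int k - int l < int c))"
      by (simp only: key[OF c])
  qed
  finally have fin: "\<not> (\<exists>c. viol n (i ` {1..a}) c) \<longleftrightarrow> (\<forall>c\<in>{1..n}. \<not> (\<exists>k\<in>{1..a}. \<exists>l\<in>{1..a}. i k = c \<and> i l = 2*n+1-c \<and> int n + int k - int l < int c))" .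
  show ?thesis
  proof
    assume A: "\<forall>k\<in>{1..a}. \<forall>l\<in>{1..a}. \<forall>c\<in>{1..n}. i k = c \<and> i l = 2 * n + 1 - c \<longrightarrow> int n + int k - int l \<ge> int c"
    show "\<not> (\<exists>c. viol n (i ` {1..a}) c)" unfolding fin
    proof (intro ballI notI)
      fix c assume c: "c \<in> {1..n}" and ex: "\<exists>k\<in>{1..a}. \<exists>l\<in>{1..a}. i k = c \<and> i l = 2*n+1-c \<and> int n + int k - int l < int c"
      from ex obtain k where k1: "k \<in> {1..a}" and ex2: "\<exists>l\<in>{1..a}. i k = c \<and> i l = 2*n+1-c \<and> int n + int k - int l < int c"
        by (rule bexE)
      from ex2 obtain l where l1: "l \<in> {1..a}" and kl: "i k = c \<and> i l = 2*n+1-c \<and> int n + int k - int l < int c"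
        by (rule bexE)
      have "int n + int k - int l \<ge> int c" using A[rule_format, OF k1 l1 c] kl by simp
      then show False using kl by simp
    qed
  next
    assume B: "\<not> (\<exists>c. viol n (i ` {1..a}) c)"
    show "\<forall>k\<in>{1..a}. \<forall>l\<in>{1..a}. \<forall>c\<in>{1..n}. i k = c \<and> i l = 2 * n + 1 - c \<longrightarrow> int n + int k - int l \<ge> int c"
    proof (intro ballI impI)
      fix k l c assume k: "k \<in> {1..a}" and l: "l \<in> {1..a}" and c: "c \<in> {1..n}" and e: "i k = c \<and> i l = 2 * n + 1 - c"
      have B': "\<forall>c\<in>{1..n}. \<not> (\<exists>k\<in>{1..a}. \<exists>l\<in>{1..a}. i k = c \<and> i l = 2*n+1-c \<and> int n + int k - int l < int c)"
        using B unfolding fin .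
      have nb: "\<not> (\<exists>k\<in>{1..a}. \<exists>l\<in>{1..a}. i k = c \<and> i l = 2*n+1-c \<and> int n + int k - int l < int c)"
        using bspec[OF B' c] .
      show "int n + int k - int l \<ge> int c"
      proof (rule ccontr)
        assume "\<not> int n + int k - int l \<ge> int c"
        then have lt: "int n + int k - int l < int c" by simp
        have "\<exists>k\<in>{1..a}. \<exists>l\<in>{1..a}. i k = c \<and> i l = 2*n+1-c \<and> int n + int k - int l < int c"
          apply (rule bexI[of _ k])
           apply (rule bexI[of _ l])
          using e lt k l by auto
        then show False using nb by simp
      qed
    qed
  qed
qed

definition sig :: "nat \<Rightarrow> nat \<Rightarrow> nat" where "sig n x = (if x \<le> n then x else x + 2)"

lemma sig_strict: "strict_mono (sig n)"
  unfolding strict_mono_def sig_def by auto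

lemma sig_inj: "inj (sig n)" using strict_mono_imp_inj_on[OF sig_strict] .

lemma xx_sig: "xx n Q (sig n x) = zJ n Q x"
  unfolding sig_def xx_def zJ_def by auto

lemma sl_sig: "finite A \<Longrightarrow> sl (sig n ` A) = map (sig n) (sl A)"
proof -
  assume fA: "finite A"
  have sw: "sorted_wrt (<) (map (sig n) (sl A))"
    unfolding sorted_wrt_map using sorted_wrt_mono_rel[of "sl A" "(<)" "\<lambda>x y. sig n x < sig n y"]
      sig_strict[of n] by (simp add: strict_mono_def)
  have "length (map (sig n) (sl A)) = card (sig n ` A)"
    using fA card_image[OF inj_on_subset[OF sig_inj subset_UNIV]] by simp
  then show ?thesis using sw fA
    by (subst sorted_list_of_set_unique[symmetric]) auto
qed

lemma Wx_sig: "Wg (xx n Q) (map (sig n) xs) v = W n Q xs v"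
  by (simp add: Wg_map xx_sig)

lemma sum_split: "finite A \<Longrightarrow> sum g A = sum g {x\<in>A. P x} + sum g {x\<in>A. \<not> P x}"
proof -
  assume "finite A"
  have "A = {x\<in>A. P x} \<union> {x\<in>A. \<not> P x}" by auto
  then have "sum g A = sum g ({x\<in>A. P x} \<union> {x\<in>A. \<not> P x})" by simp
  also have "\<dots> = sum g {x\<in>A. P x} + sum g {x\<in>A. \<not> P x}"
    by (rule sum.union_disjoint) (use \<open>finite A\<close> in auto)
  finally show ?thesis .
qed

lemma sl3:
  fixes S :: "nat set"
  assumes "finite S"
  shows "sl S = sl {x\<in>S. x \<le> n} @ sl {x\<in>S. n < x \<and> x \<le> n+2} @ sl {x\<in>S. n+2 < x}"
proof -
  have "S = {x\<in>S. x \<le> n} \<union> ({x\<in>S. n < x \<and> x \<le> n+2} \<union> {x\<in>S. n+2 < x})" by auto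
  then have "sl S = sl ({x\<in>S. x \<le> n} \<union> ({x\<in>S. n < x \<and> x \<le> n+2} \<union> {x\<in>S. n+2 < x}))" by simp
  also have "\<dots> = sl {x\<in>S. x \<le> n} @ sl ({x\<in>S. n < x \<and> x \<le> n+2} \<union> {x\<in>S. n+2 < x})"
    by (rule sl_union) (use assms in auto)
  also have "sl ({x\<in>S. n < x \<and> x \<le> n+2} \<union> {x\<in>S. n+2 < x}) = sl {x\<in>S. n < x \<and> x \<le> n+2} @ sl {x\<in>S. n+2 < x}"
    by (rule sl_union) (use assms in auto)
  finally show ?thesis .
qed

lemma sig_decomp:
  assumes "S \<subseteq> {1..2*n+2}"
  shows "S = sig n ` {x\<in>{1..2*n}. sig n x \<in> S} \<union> (S \<inter> {n+1, n+2})"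
proof (rule set_eqI, rule iffI)
  fix s assume s: "s \<in> S"
  then have sr: "1 \<le> s" "s \<le> 2*n+2" using assms by auto
  show "s \<in> sig n ` {x\<in>{1..2*n}. sig n x \<in> S} \<union> (S \<inter> {n+1, n+2})"
  proof (cases "s \<le> n")
    case True
    then have "sig n s = s" unfolding sig_def by simp
    then show ?thesis using s sr True by (intro UnI1 image_eqI[of _ _ s]) auto
  next
    case False
    show ?thesis
    proof (cases "s = n+1 \<or> s = n+2")
      case True then show ?thesis using s by auto
    next
      case F2: False
      then have "sig n (s-2) = s" using False unfolding sig_def by auto
      then show ?thesis using s sr False F2 by (intro UnI1 image_eqI[of _ _ "s-2"]) auto
    qed
  qed
next
  fix s assume "s \<in> sig n ` {x\<in>{1..2*n}. sig n x \<in> S} \<union> (S \<inter> {n+1, n+2})"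
  then show "s \<in> S" by auto
qed

lemma sig_range: "x \<in> {1..2*n} \<Longrightarrow> sig n x \<in> {1..2*n+2} \<and> sig n x \<noteq> n+1 \<and> sig n x \<noteq> n+2"
  unfolding sig_def by auto

lemma sig_pre_img:
  assumes "M \<subseteq> {1..2*n}" and E: "E \<subseteq> {n+1,n+2}"
  shows "{x\<in>{1..2*n}. sig n x \<in> sig n ` M \<union> E} = M"
proof -
  have "sig n x \<notin> E" if "x \<in> {1..2*n}" for x using sig_range[OF that] E by auto
  then show ?thesis using assms inj_eq[OF sig_inj] by auto
qed

lemma sig_img:
  assumes "M \<subseteq> {1..2*n}"
  shows "sig n ` M \<subseteq> {1..2*n+2}" "n+1 \<notin> sig n ` M" "n+2 \<notin> sig n ` M"
proof -
  have h: "\<And>x. x \<in> M \<Longrightarrow> 1 \<le> x \<and> x \<le> 2*n" using assms by auto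
  show "sig n ` M \<subseteq> {1..2*n+2}" using h unfolding sig_def by auto
  show "n+1 \<notin> sig n ` M"
  proof
    assume "n+1 \<in> sig n ` M" then obtain x where "x \<in> M" "n+1 = sig n x" by auto
    then show False unfolding sig_def by (auto split: if_splits)
  qed
  show "n+2 \<notin> sig n ` M"
  proof
    assume "n+2 \<in> sig n ` M" then obtain x where "x \<in> M" "n+2 = sig n x" by auto
    then show False using h[of x] unfolding sig_def by (auto split: if_splits)
  qed
qed

lemma card_sig: "card (sig n ` M) = card M"
  by (rule card_image[OF inj_on_subset[OF sig_inj subset_UNIV]])

lemma W3: "Wg g (A @ [x,y] @ C) v = Wg g A v * (g x (v - of_nat (length A)) * g y (v - of_nat (length A) - 1)) * Wg g C (v - of_nat (length A) - 2)"
  by (simp add: Wg_append algebra_simps)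

lemma sumF0:
  "(\<Sum>X\<in>{X. X \<subseteq> {1..2*n} \<and> card X = a}. W n Q (sl X) v)
   = (\<Sum>S\<in>{S\<in>{S. S \<subseteq> {1..2*n+2} \<and> card S = a}. n+1 \<notin> S \<and> n+2 \<notin> S}. Wg (xx n Q) (sl S) v)"
proof (rule sum.reindex_bij_witness[where j = "\<lambda>X. sig n ` X" and i = "\<lambda>S. {x\<in>{1..2*n}. sig n x \<in> S}"])
  fix X assume X: "X \<in> {X. X \<subseteq> {1..2*n} \<and> card X = a}"
  then have sub: "X \<subseteq> {1..2*n}" by simp
  show "{x\<in>{1..2*n}. sig n x \<in> sig n ` X} = X" using sig_pre_img[OF sub, of "{}"] by simp
  note r = sig_img[OF sub]
  have "card (sig n ` X) = a" using X card_sig[of n X] by simp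
  then show "sig n ` X \<in> {S\<in>{S. S \<subseteq> {1..2*n+2} \<and> card S = a}. n+1 \<notin> S \<and> n+2 \<notin> S}"
    using r by simp
  have fX: "finite X" using sub finite_subset by blast
  show "Wg (xx n Q) (sl (sig n ` X)) v = W n Q (sl X) v" by (simp add: sl_sig[OF fX] Wx_sig)
next
  fix S assume S: "S \<in> {S\<in>{S. S \<subseteq> {1..2*n+2} \<and> card S = a}. n+1 \<notin> S \<and> n+2 \<notin> S}"
  then have sub: "S \<subseteq> {1..2*n+2}" and nm: "n+1 \<notin> S" "n+2 \<notin> S" by auto
  have e: "sig n ` {x\<in>{1..2*n}. sig n x \<in> S} = S" using sig_decomp[OF sub] nm by auto
  show "sig n ` {x\<in>{1..2*n}. sig n x \<in> S} = S" by (rule e)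
  have "card {x\<in>{1..2*n}. sig n x \<in> S} = a"
    using S e card_sig[of n "{x\<in>{1..2*n}. sig n x \<in> S}"] by simp
  then show "{x\<in>{1..2*n}. sig n x \<in> S} \<in> {X. X \<subseteq> {1..2*n} \<and> card X = a}"
    by auto
qed

lemma sumF3:
  assumes Qnz: "\<forall>b\<in>{1..n}. \<forall>v. Q b v \<noteq> 0" and n2: "2 \<le> n"
  shows "(\<Sum>M\<in>MS n a. W n Q (midw n M) v)
   = (\<Sum>S\<in>{S\<in>{S. S \<subseteq> {1..2*n+2} \<and> card S = a}. n+1 \<in> S \<and> n+2 \<in> S}. - Wg (xx n Q) (sl S) v)"
proof (rule sum.reindex_bij_witness[where j = "\<lambda>M. sig n ` M \<union> {n+1,n+2}" and i = "\<lambda>S. {x\<in>{1..2*n}. sig n x \<in> S}"])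
  fix M assume M: "M \<in> MS n a"
  then have sub: "M \<subseteq> {1..2*n}" and cM: "card M + 2 = a" unfolding MS_def by auto
  have fM: "finite M" using sub finite_subset by blast
  show "{x\<in>{1..2*n}. sig n x \<in> sig n ` M \<union> {n+1,n+2}} = M" using sig_pre_img[OF sub, of "{n+1,n+2}"] by simp
  note r = sig_img[OF sub]
  have "card (sig n ` M \<union> {n+1,n+2}) = card (sig n ` M) + card {n+1,n+2}"
    by (rule card_Un_disjoint) (use fM r in auto)
  then have "card (sig n ` M \<union> {n+1,n+2}) = a" using card_sig[of n M] cM by simp
  then show "sig n ` M \<union> {n+1,n+2} \<in> {S\<in>{S. S \<subseteq> {1..2*n+2} \<and> card S = a}. n+1 \<in> S \<and> n+2 \<in> S}"
    using r by auto
  define S where "S = sig n ` M \<union> {n+1,n+2}"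
  define lo where "lo = {x\<in>M. x \<le> n}"
  define hi where "hi = {x\<in>M. n < x}"
  have fS: "finite S" unfolding S_def using fM by simp
  have e1: "{x\<in>S. x \<le> n} = lo" unfolding S_def lo_def sig_def by auto
  have e2: "{x\<in>S. n < x \<and> x \<le> n+2} = {n+1,n+2}" unfolding S_def sig_def by auto
  have e3: "{x\<in>S. n+2 < x} = sig n ` hi" unfolding S_def hi_def sig_def by auto
  have fhi: "finite hi" unfolding hi_def using fM by simp
  have slS: "sl S = sl lo @ [n+1, n+2] @ map (sig n) (sl hi)"
    using sl3[OF fS, of n] unfolding e1 e2 e3 sl_sig[OF fhi] by (simp add: sl_insert_min)
  have mM: "midw n M = sl lo @ [n, n+1] @ sl hi" unfolding midw_def lo_def hi_def by simp
  have lo_eq: "Wg (xx n Q) (sl lo) v = W n Q (sl lo) v"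
    by (rule Wg_cong) (use fM in \<open>auto simp: lo_def xx_def zJ_def\<close>)
  have m: "xx n Q (n+1) t * xx n Q (n+2) (t-1) = -(zJ n Q n t * zJ n Q (n+1) (t-1))" for t
    using xmid_prod[OF Qnz n2, of t] by (simp add: xx_def)
  show "- Wg (xx n Q) (sl (sig n ` M \<union> {n+1,n+2})) v = W n Q (midw n M) v"
    unfolding S_def[symmetric] slS mM W3 m lo_eq Wx_sig by simp
next
  fix S assume S: "S \<in> {S\<in>{S. S \<subseteq> {1..2*n+2} \<and> card S = a}. n+1 \<in> S \<and> n+2 \<in> S}"
  then have sub: "S \<subseteq> {1..2*n+2}" and nm: "n+1 \<in> S" "n+2 \<in> S" and cS: "card S = a" by auto
  define M where "M = {x\<in>{1..2*n}. sig n x \<in> S}"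
  have e: "sig n ` M \<union> {n+1,n+2} = S" using sig_decomp[OF sub] nm unfolding M_def by auto
  show "sig n ` {x\<in>{1..2*n}. sig n x \<in> S} \<union> {n+1,n+2} = S" using e unfolding M_def .
  have fM: "finite M" unfolding M_def by simp
  have Msub: "M \<subseteq> {1..2*n}" unfolding M_def by auto
  note r = sig_img(2,3)[OF Msub]
  have "card (sig n ` M \<union> {n+1,n+2}) = card (sig n ` M) + card {n+1,n+2}"
    by (rule card_Un_disjoint) (use fM r in auto)
  then have "card M + 2 = a" using e cS card_sig[of n M] by simp
  then show "{x\<in>{1..2*n}. sig n x \<in> S} \<in> MS n a" unfolding MS_def M_def[symmetric] using M_def by auto
qed

lemma sumF12:
  "(\<Sum>S\<in>{S\<in>{S. S \<subseteq> {1..2*n+2} \<and> card S = a}. n+1 \<notin> S \<and> n+2 \<in> S}. Wg (xx n Q) (sl S) v)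
   = (\<Sum>S\<in>{S\<in>{S. S \<subseteq> {1..2*n+2} \<and> card S = a}. n+1 \<in> S \<and> n+2 \<notin> S}. - Wg (xx n Q) (sl S) v)"
proof (rule sum.reindex_bij_witness[where j = "\<lambda>S. insert (n+1) (S - {n+2})" and i = "\<lambda>S. insert (n+2) (S - {n+1})"])
  fix S assume S: "S \<in> {S\<in>{S. S \<subseteq> {1..2*n+2} \<and> card S = a}. n+1 \<notin> S \<and> n+2 \<in> S}"
  then have sub: "S \<subseteq> {1..2*n+2}" and nm: "n+1 \<notin> S" "n+2 \<in> S" and cS: "card S = a" by auto
  have fS: "finite S" using sub finite_subset by blast
  show "insert (n+2) (insert (n+1) (S - {n+2}) - {n+1}) = S" using nm by auto
  have "card S > 0" using fS nm by (auto simp: card_gt_0_iff)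
  then have "card (insert (n+1) (S - {n+2})) = card S" using fS nm by (simp add: card_Suc_Diff1)
  then show "insert (n+1) (S - {n+2}) \<in> {S\<in>{S. S \<subseteq> {1..2*n+2} \<and> card S = a}. n+1 \<in> S \<and> n+2 \<notin> S}"
    using sub cS by auto
  define S' where "S' = insert (n+1) (S - {n+2})"
  have fS': "finite S'" unfolding S'_def using fS by simp
  have a1: "{x\<in>S'. x \<le> n} = {x\<in>S. x \<le> n}" unfolding S'_def by auto
  have a2: "{x\<in>S'. n < x \<and> x \<le> n+2} = {n+1}" unfolding S'_def using nm by auto
  have a3: "{x\<in>S'. n+2 < x} = {x\<in>S. n+2 < x}" unfolding S'_def by auto
  have b2: "{x\<in>S. n < x \<and> x \<le> n+2} = {n+2}"
  proof (rule set_eqI)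
    fix x show "x \<in> {x\<in>S. n < x \<and> x \<le> n+2} \<longleftrightarrow> x \<in> {n+2}"
      using nm by (cases "x = n+1"; cases "x = n+2") auto
  qed
  show "- Wg (xx n Q) (sl (insert (n+1) (S - {n+2}))) v = Wg (xx n Q) (sl S) v"
    unfolding S'_def[symmetric] sl3[OF fS', of n] sl3[OF fS, of n] a1 a2 a3 b2
    by (simp add: Wg_append xx_def)
next
  fix S assume S: "S \<in> {S\<in>{S. S \<subseteq> {1..2*n+2} \<and> card S = a}. n+1 \<in> S \<and> n+2 \<notin> S}"
  then have sub: "S \<subseteq> {1..2*n+2}" and nm: "n+1 \<in> S" "n+2 \<notin> S" and cS: "card S = a" by auto
  have fS: "finite S" using sub finite_subset by blast
  show "insert (n+1) (insert (n+2) (S - {n+1}) - {n+2}) = S" using nm by auto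
  have "card S > 0" using fS nm by (auto simp: card_gt_0_iff)
  then have "card (insert (n+2) (S - {n+1})) = card S" using fS nm by (simp add: card_Suc_Diff1)
  then show "insert (n+2) (S - {n+1}) \<in> {S\<in>{S. S \<subseteq> {1..2*n+2} \<and> card S = a}. n+1 \<notin> S \<and> n+2 \<in> S}"
    using sub cS by auto
qed

lemma sum4:
  assumes "finite A"
  shows "sum g A = sum g {x\<in>A. \<not> p x \<and> \<not> q x} + sum g {x\<in>A. p x \<and> \<not> q x} + sum g {x\<in>A. \<not> p x \<and> q x} + sum g {x\<in>A. p x \<and> q x}"
proof -
  have fa: "finite {x\<in>A. p x}" "finite {x\<in>A. \<not> p x}" using assms by auto
  have "sum g A = sum g {x\<in>A. p x} + sum g {x\<in>A. \<not> p x}" by (rule sum_split[OF assms])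
  also have "sum g {x\<in>A. p x} = sum g {x\<in>{x\<in>A. p x}. q x} + sum g {x\<in>{x\<in>A. p x}. \<not> q x}"
    by (rule sum_split[OF fa(1)])
  also have "sum g {x\<in>A. \<not> p x} = sum g {x\<in>{x\<in>A. \<not> p x}. q x} + sum g {x\<in>{x\<in>A. \<not> p x}. \<not> q x}"
    by (rule sum_split[OF fa(2)])
  also have "{x\<in>{x\<in>A. p x}. q x} = {x\<in>A. p x \<and> q x}" by auto
  also have "{x\<in>{x\<in>A. p x}. \<not> q x} = {x\<in>A. p x \<and> \<not> q x}" by auto
  also have "{x\<in>{x\<in>A. \<not> p x}. q x} = {x\<in>A. \<not> p x \<and> q x}" by auto
  also have "{x\<in>{x\<in>A. \<not> p x}. \<not> q x} = {x\<in>A. \<not> p x \<and> \<not> q x}" by auto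
  finally show ?thesis by (simp add: algebra_simps)
qed

theorem mainTheorem3:
  fixes n a :: nat and Q :: "nat \<Rightarrow> complex \<Rightarrow> complex" and u :: complex
  assumes "n \<ge> 2"
    and "\<forall>b\<in>{1..n}. \<forall>v. Q b v \<noteq> 0"
    and "1 \<le> a" and "a \<le> n"
  shows "T1 n Q a u =
    (\<Sum>i\<in>{i \<in> {1..a} \<rightarrow>\<^sub>E {1..2 * n + 2}. \<forall>k\<in>{1..a}. \<forall>l\<in>{1..a}. k < l \<longrightarrow> i k < i l}.
       \<Prod>k\<in>{1..a}. xx n Q (i k) (u + of_nat a / 2 - of_nat k))"
proof -
  note n2 = assms(1) and Qnz = assms(2) and an = assms(4)
  define v0 where "v0 = u + of_nat a / 2 - 1"
  define cond where "cond = (\<lambda>i::nat\<Rightarrow>nat. \<forall>k\<in>{1..a}. \<forall>l\<in>{1..a}. \<forall>c\<in>{1..n}. i k = c \<and> i l = 2 * n + 1 - c \<longrightarrow> int n + int k - int l \<ge> int c)"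
  have adm: "admissible n a = {i\<in>incr a {1..2*n}. cond i}"
    unfolding admissible_def incr_def cond_def by auto
  have ups: "{1..<1+a} = {1..a}" by auto
  have prodL: "(\<Prod>k\<in>{1..a}. zJ n Q (i k) (u - 1 / 2 + (of_nat a - 2 * of_nat k + 1) / 2)) = W n Q (map i [1..<1+a]) v0" for i
  proof -
    have "W n Q (map i [1..<1+a]) v0 = (\<Prod>k\<in>{1..<1+a}. zJ n Q (i k) (v0 - of_nat (k - 1)))"
      using Wg_upt[of "zJ n Q" i 1 a v0] by simp
    also have "\<dots> = (\<Prod>k\<in>{1..a}. zJ n Q (i k) (u - 1 / 2 + (of_nat a - 2 * of_nat k + 1) / 2))"
      unfolding ups
    proof (rule prod.cong[OF refl])
      fix k assume "k \<in> {1..a}"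
      then have kk: "of_nat (k - 1) = (of_nat k - 1 :: complex)" by (simp add: of_nat_diff)
      have "v0 - of_nat (k - 1) = u - 1 / 2 + (of_nat a - 2 * of_nat k + 1) / 2"
        unfolding v0_def kk by (simp add: field_simps)
      then show "zJ n Q (i k) (v0 - of_nat (k - 1)) = zJ n Q (i k) (u - 1 / 2 + (of_nat a - 2 * of_nat k + 1) / 2)"
        by simp
    qed
    finally show ?thesis by simp
  qed
  have prodR: "(\<Prod>k\<in>{1..a}. xx n Q (i k) (u + of_nat a / 2 - of_nat k)) = Wg (xx n Q) (map i [1..<1+a]) v0" for i
  proof -
    have "Wg (xx n Q) (map i [1..<1+a]) v0 = (\<Prod>k\<in>{1..<1+a}. xx n Q (i k) (v0 - of_nat (k - 1)))"
      using Wg_upt[of "xx n Q" i 1 a v0] by simp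
    also have "\<dots> = (\<Prod>k\<in>{1..a}. xx n Q (i k) (u + of_nat a / 2 - of_nat k))"
      unfolding ups
    proof (rule prod.cong[OF refl])
      fix k assume "k \<in> {1..a}"
      then have kk: "of_nat (k - 1) = (of_nat k - 1 :: complex)" by (simp add: of_nat_diff)
      have "v0 - of_nat (k - 1) = u + of_nat a / 2 - of_nat k"
        unfolding v0_def kk by (simp add: field_simps)
      then show "xx n Q (i k) (v0 - of_nat (k - 1)) = xx n Q (i k) (u + of_nat a / 2 - of_nat k)"
        by simp
    qed
    finally show ?thesis by simp
  qed
  define F2n where "F2n = {X. X \<subseteq> {1..2*n} \<and> card X = a}"
  define ADM where "ADM = {X. X \<subseteq> {1..2*n} \<and> card X = a \<and> \<not> (\<exists>c. viol n X c)}"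
  have L1: "T1 n Q a u = (\<Sum>X\<in>ADM. W n Q (sl X) v0)"
  proof -
    have "T1 n Q a u = (\<Sum>i\<in>{i\<in>incr a {1..2*n}. cond i}. W n Q (map i [1..<1+a]) v0)"
      unfolding T1_def Tsum_def adm using prodL by simp
    also have "\<dots> = (\<Sum>X\<in>{X. X \<subseteq> {1..2*n} \<and> card X = a \<and> \<not> (\<exists>c. viol n X c)}. W n Q (sl X) v0)"
      apply (rule sum_incr_sets)
       apply simp
      subgoal for i using adm_iff[of i a n] unfolding cond_def by simp
      done
    finally show ?thesis unfolding ADM_def .
  qed
  define F' where "F' = {S. S \<subseteq> {1..2*n+2} \<and> card S = a}"
  have R1: "(\<Sum>i\<in>{i \<in> {1..a} \<rightarrow>\<^sub>E {1..2 * n + 2}. \<forall>k\<in>{1..a}. \<forall>l\<in>{1..a}. k < l \<longrightarrow> i k < i l}.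
       \<Prod>k\<in>{1..a}. xx n Q (i k) (u + of_nat a / 2 - of_nat k)) = (\<Sum>S\<in>F'. Wg (xx n Q) (sl S) v0)"
  proof -
    have "{i \<in> {1..a} \<rightarrow>\<^sub>E {1..2 * n + 2}. \<forall>k\<in>{1..a}. \<forall>l\<in>{1..a}. k < l \<longrightarrow> i k < i l} = {i\<in>incr a {1..2*n+2}. True}"
      unfolding incr_def by simp
    then have "(\<Sum>i\<in>{i \<in> {1..a} \<rightarrow>\<^sub>E {1..2 * n + 2}. \<forall>k\<in>{1..a}. \<forall>l\<in>{1..a}. k < l \<longrightarrow> i k < i l}.
       \<Prod>k\<in>{1..a}. xx n Q (i k) (u + of_nat a / 2 - of_nat k)) = (\<Sum>i\<in>{i\<in>incr a {1..2*n+2}. True}. Wg (xx n Q) (map i [1..<1+a]) v0)"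
      using prodR by simp
    also have "\<dots> = (\<Sum>X\<in>{X. X \<subseteq> {1..2*n+2} \<and> card X = a \<and> True}. Wg (xx n Q) (sl X) v0)"
      by (rule sum_incr_sets) auto
    finally show ?thesis unfolding F'_def by simp
  qed
  have finF': "finite F'" unfolding F'_def by (rule finite_subset[of _ "Pow {1..2*n+2}"]) auto
  have R2: "(\<Sum>S\<in>F'. Wg (xx n Q) (sl S) v0) = (\<Sum>X\<in>F2n. W n Q (sl X) v0) - (\<Sum>M\<in>MS n a. W n Q (midw n M) v0)"
  proof -
    let ?g = "\<lambda>S. Wg (xx n Q) (sl S) v0"
    have s4: "sum ?g F' = sum ?g {S\<in>F'. \<not> n+1 \<in> S \<and> \<not> n+2 \<in> S} + sum ?g {S\<in>F'. n+1 \<in> S \<and> \<not> n+2 \<in> S}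
         + sum ?g {S\<in>F'. \<not> n+1 \<in> S \<and> n+2 \<in> S} + sum ?g {S\<in>F'. n+1 \<in> S \<and> n+2 \<in> S}"
      by (rule sum4[OF finF'])
    have a0: "sum ?g {S\<in>F'. \<not> n+1 \<in> S \<and> \<not> n+2 \<in> S} = (\<Sum>X\<in>F2n. W n Q (sl X) v0)"
      unfolding F'_def F2n_def using sumF0[where n=n and a=a and Q=Q and v=v0] by simp
    have a12: "sum ?g {S\<in>F'. \<not> n+1 \<in> S \<and> n+2 \<in> S} = - sum ?g {S\<in>F'. n+1 \<in> S \<and> \<not> n+2 \<in> S}"
      unfolding F'_def using sumF12[where n=n and a=a and Q=Q and v=v0] by (simp add: sum_negf)
    have a3: "sum ?g {S\<in>F'. n+1 \<in> S \<and> n+2 \<in> S} = - (\<Sum>M\<in>MS n a. W n Q (midw n M) v0)"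
      unfolding F'_def using sumF3[OF Qnz n2, where a=a and v=v0] by (simp add: sum_negf)
    show ?thesis using s4 a0 a12 a3 by simp
  qed
  have S1: "(\<Sum>X\<in>F2n. W n Q (sl X) v0) = (\<Sum>X\<in>ADM. W n Q (sl X) v0) + (\<Sum>X\<in>NA n a. W n Q (sl X) v0)"
  proof -
    have finF: "finite F2n" unfolding F2n_def by (rule finite_subset[of _ "Pow {1..2*n}"]) auto
    have "(\<Sum>X\<in>F2n. W n Q (sl X) v0) = (\<Sum>X\<in>{X\<in>F2n. \<not> (\<exists>c. viol n X c)}. W n Q (sl X) v0) + (\<Sum>X\<in>{X\<in>F2n. \<not> \<not> (\<exists>c. viol n X c)}. W n Q (sl X) v0)"
      by (rule sum_split[OF finF])
    moreover have "{X\<in>F2n. \<not> (\<exists>c. viol n X c)} = ADM" unfolding F2n_def ADM_def by auto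
    moreover have "{X\<in>F2n. \<not> \<not> (\<exists>c. viol n X c)} = NA n a" unfolding F2n_def NA_def by auto
    ultimately show ?thesis by simp
  qed
  have C: "(\<Sum>X\<in>NA n a. W n Q (sl X) v0) = (\<Sum>M\<in>MS n a. W n Q (midw n M) v0)"
    by (rule core[OF Qnz an])
  show ?thesis unfolding L1 R1 R2 using S1 C by simp
qed

end
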